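(* Let $G=\mathbb{Z}_{N_1}\oplus\cdots\oplus\mathbb{Z}_{N_k}$ be a finite Abelian group (each $N_j$ a prime power), let $K\le G$ and let $f:G\to G$ satisfy $f(x)=f(y)\iff x-y\in K$. Let $0<\epsilon<1$ and run the following procedure with $h$ iterations: in each iteration $i=1,\dots,h$ (independently), prepare $|0\rangle\cdots|0\rangle|0_G\rangle\in\mathcal{H}_{N_1}\otimes\cdots\otimes\mathcal{H}_{N_k}\otimes\mathcal{H}_G$, apply $\mathrm{QFT}_{N_1}\otimes\cdots\otimes\mathrm{QFT}_{N_k}\otimes \mathrm{I}_G$, then $U_f$, then $\mathrm{QFT}_{N_1}^\dagger\otimes\cdots\otimes\mathrm{QFT}_{N_k}^\dagger\otimes \mathrm{I}_G$, and measure the first $k$ registers in the computational basis, obtaining $\mathbf{t}_i\in G$. Let $T_h=\{\mathbf{t}_1,\dots,\mathbf{t}_h\}$ and output $A=\{x\in G:\langle \mathbf{t}_i,x\rangle=0 \text{ for all } i\}=(\mathrm{span}(T_h))^{\perp}$. Then $\Pr(A=K)\ge 1-\epsilon$ provided \[ h\ \ge\ \mathrm{rank}(G)+\left\lceil \log_2 \tfrac{2}{\epsilon}\right\rceil \quad\text{or}\quad h\ \ge\ \mathrm{len}(G)-\mathrm{len}(K)+\left\lceil \log_2 \tfrac{1}{\epsilon}\right\rceil. \]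
   Context: Elements of $G$ are tuples $x=(x_1,\dots,x_k)$ with $x_j\in\{0,\dots,N_j-1\}$. The bilinear form is $\langle x,y\rangle=\sum_{j=1}^k x_jy_j/N_j \pmod 1\in\mathbb{R}/\mathbb{Z}$, and for $H\le G$, $H^\perp=\{g\in G:\langle h,g\rangle=0 \ \forall h\in H\}$; $\mathrm{span}(T)$ is the subgroup generated by $T$. $\mathrm{rank}(G)$ is the minimal size of a generating set of $G$; $\mathrm{len}(G)$ is the length of a composition series of $G$ (for $|G|=\prod p_i^{e_i}$ this is $\sum e_i$). $\mathcal{H}_{N}$ is the $N$-dimensional Hilbert space with orthonormal basis $\{|x\rangle:x\in\mathbb{Z}_N\}$, $\mathcal{H}_G=\bigotimes_j\mathcal{H}_{N_j}$ with basis $\{|g\rangle: g\in G\}$, $\mathrm{I}_G$ its identity, and $\mathrm{QFT}_N|x\rangle=\frac{1}{\sqrt N}\sum_{y=0}^{N-1}e^{2\pi i xy/N}|y\rangle$. The oracle $U_f$ acts on $\mathcal{H}_G\otimes\mathcal{H}_G$ by $U_f|g\rangle|b\rangle=|g\rangle|b+f(g)\rangle$ (addition in $G$); $0_G$ is the zero of $G$. *)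

theory Defs
  imports Complex_Main "HOL-Computational_Algebra.Primes"
begin

text \<open>The group G = Z_{N_0} + ... + Z_{N_(k-1)}; elements are functions nat => nat
  with x j < N j for j < k and x j = 0 for j >= k.\<close>

definition grp :: "(nat \<Rightarrow> nat) \<Rightarrow> nat \<Rightarrow> (nat \<Rightarrow> nat) set" where
  "grp N k = {x. (\<forall>j<k. x j < N j) \<and> (\<forall>j\<ge>k. x j = 0)}"

definition gzero :: "nat \<Rightarrow> nat" where
  "gzero = (\<lambda>j. 0)"

definition gadd :: "(nat \<Rightarrow> nat) \<Rightarrow> nat \<Rightarrow> (nat \<Rightarrow> nat) \<Rightarrow> (nat \<Rightarrow> nat) \<Rightarrow> (nat \<Rightarrow> nat)" where
  "gadd N k x y = (\<lambda>j. if j < k then (x j + y j) mod N j else 0)"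

definition gneg :: "(nat \<Rightarrow> nat) \<Rightarrow> nat \<Rightarrow> (nat \<Rightarrow> nat) \<Rightarrow> (nat \<Rightarrow> nat)" where
  "gneg N k x = (\<lambda>j. if j < k then (N j - x j) mod N j else 0)"

definition gsub :: "(nat \<Rightarrow> nat) \<Rightarrow> nat \<Rightarrow> (nat \<Rightarrow> nat) \<Rightarrow> (nat \<Rightarrow> nat) \<Rightarrow> (nat \<Rightarrow> nat)" where
  "gsub N k x y = gadd N k x (gneg N k y)"

definition is_subgroup :: "(nat \<Rightarrow> nat) \<Rightarrow> nat \<Rightarrow> (nat \<Rightarrow> nat) set \<Rightarrow> bool" where
  "is_subgroup N k H \<longleftrightarrow> H \<subseteq> grp N k \<and> gzero \<in> H \<and>
     (\<forall>x\<in>H. \<forall>y\<in>H. gadd N k x y \<in> H) \<and> (\<forall>x\<in>H. gneg N k x \<in> H)"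

definition gspan :: "(nat \<Rightarrow> nat) \<Rightarrow> nat \<Rightarrow> (nat \<Rightarrow> nat) set \<Rightarrow> (nat \<Rightarrow> nat) set" where
  "gspan N k T = \<Inter>{H. is_subgroup N k H \<and> T \<subseteq> H}"

definition grank :: "(nat \<Rightarrow> nat) \<Rightarrow> nat \<Rightarrow> nat" where
  "grank N k = (LEAST n. \<exists>T. T \<subseteq> grp N k \<and> finite T \<and> card T = n \<and> gspan N k T = grp N k)"

text \<open>len(H) for a finite abelian group H: length of a composition series,
  i.e. the number of prime factors of the order |H| counted with multiplicity.\<close>
definition glen :: "'a set \<Rightarrow> nat" where
  "glen H = (\<Sum>p\<in>prime_factors (card H). multiplicity p (card H))"

text \<open>Bilinear form: <x,y> = sum_j x_j y_j / N_j (mod 1); "= 0" means the sum is an integer.\<close>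
definition pairing :: "(nat \<Rightarrow> nat) \<Rightarrow> nat \<Rightarrow> (nat \<Rightarrow> nat) \<Rightarrow> (nat \<Rightarrow> nat) \<Rightarrow> real" where
  "pairing N k x y = (\<Sum>j<k. real (x j * y j) / real (N j))"

definition pairing_zero :: "(nat \<Rightarrow> nat) \<Rightarrow> nat \<Rightarrow> (nat \<Rightarrow> nat) \<Rightarrow> (nat \<Rightarrow> nat) \<Rightarrow> bool" where
  "pairing_zero N k x y \<longleftrightarrow> pairing N k x y \<in> \<int>"

type_synonym state = "(nat \<Rightarrow> nat) \<Rightarrow> (nat \<Rightarrow> nat) \<Rightarrow> complex"

definition qft_entry :: "(nat \<Rightarrow> nat) \<Rightarrow> nat \<Rightarrow> (nat \<Rightarrow> nat) \<Rightarrow> (nat \<Rightarrow> nat) \<Rightarrow> complex" where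
  "qft_entry N k y x = (\<Prod>j<k. cis (2 * pi * real (x j * y j) / real (N j))
                                   / complex_of_real (sqrt (real (N j))))"

text \<open>Apply M (x) I_G where M y x is the matrix entry <y|M|x>.\<close>
definition apply_first :: "(nat \<Rightarrow> nat) \<Rightarrow> nat \<Rightarrow> ((nat \<Rightarrow> nat) \<Rightarrow> (nat \<Rightarrow> nat) \<Rightarrow> complex) \<Rightarrow> state \<Rightarrow> state" where
  "apply_first N k M \<psi> = (\<lambda>y b. \<Sum>x\<in>grp N k. M y x * \<psi> x b)"

definition QFT_I :: "(nat \<Rightarrow> nat) \<Rightarrow> nat \<Rightarrow> state \<Rightarrow> state" where
  "QFT_I N k = apply_first N k (qft_entry N k)"

text \<open><y|QFT^dagger|x> = conjugate of <x|QFT|y>.\<close>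
definition QFTdag_I :: "(nat \<Rightarrow> nat) \<Rightarrow> nat \<Rightarrow> state \<Rightarrow> state" where
  "QFTdag_I N k = apply_first N k (\<lambda>y x. cnj (qft_entry N k x y))"

text \<open>U_f |g>|b> = |g>|b + f(g)>.\<close>
definition Uf :: "(nat \<Rightarrow> nat) \<Rightarrow> nat \<Rightarrow> ((nat \<Rightarrow> nat) \<Rightarrow> (nat \<Rightarrow> nat)) \<Rightarrow> state \<Rightarrow> state" where
  "Uf N k f \<psi> = (\<lambda>g c. \<Sum>b\<in>grp N k. if gadd N k b (f g) = c then \<psi> g b else 0)"

definition init_state :: state where
  "init_state = (\<lambda>g b. if g = gzero \<and> b = gzero then 1 else 0)"

definition final_state :: "(nat \<Rightarrow> nat) \<Rightarrow> nat \<Rightarrow> ((nat \<Rightarrow> nat) \<Rightarrow> (nat \<Rightarrow> nat)) \<Rightarrow> state" where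
  "final_state N k f = QFTdag_I N k (Uf N k f (QFT_I N k init_state))"

text \<open>Born rule: probability of outcome t when measuring the first k registers.\<close>
definition outcome_prob :: "(nat \<Rightarrow> nat) \<Rightarrow> nat \<Rightarrow> ((nat \<Rightarrow> nat) \<Rightarrow> (nat \<Rightarrow> nat)) \<Rightarrow> (nat \<Rightarrow> nat) \<Rightarrow> real" where
  "outcome_prob N k f t = (\<Sum>b\<in>grp N k. (cmod (final_state N k f t b))\<^sup>2)"

definition output_set :: "(nat \<Rightarrow> nat) \<Rightarrow> nat \<Rightarrow> (nat \<Rightarrow> nat) set \<Rightarrow> (nat \<Rightarrow> nat) set" where
  "output_set N k T = {x\<in>grp N k. \<forall>t\<in>T. pairing_zero N k t x}"

definition prob_success :: "(nat \<Rightarrow> nat) \<Rightarrow> nat \<Rightarrow> ((nat \<Rightarrow> nat) \<Rightarrow> (nat \<Rightarrow> nat)) \<Rightarrow> nat \<Rightarrow> (nat \<Rightarrow> nat) set \<Rightarrow> real" where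
  "prob_success N k f h K =
     (\<Sum>ts\<in>{ts. length ts = h \<and> set ts \<subseteq> grp N k}.
        if output_set N k (set ts) = K then prod_list (map (outcome_prob N k f) ts) else 0)"

end

theory Submission
  imports Defs "HOL-Library.FuncSet"
begin


lemma tele: "2 \<le> M \<Longrightarrow> (\<Sum>n\<in>{3..M}. 1 / ((real n - 1) * real n)) = 1/2 - 1 / real M"
proof (induction M rule: dec_induct)
  case base then show ?case by simp
next
  case (step M)
  have "{3..Suc M} = insert (Suc M) {3..M}" using step by auto
  then have "(\<Sum>n\<in>{3..Suc M}. 1 / ((real n - 1) * real n)) = 1 / ((real (Suc M) - 1) * real (Suc M)) + (1/2 - 1 / real M)"
    using step by simp
  also have "1 / ((real (Suc M) - 1) * real (Suc M)) = 1 / real M - 1 / real (Suc M)"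
    using step(1) by (simp add: field_simps)
  also have "1 / real M - 1 / real (Suc M) + (1/2 - 1 / real M) = 1/2 - 1 / real (Suc M)" by simp
  finally show ?case .
qed

lemma sum_pow2_le:
  assumes "finite S" "\<forall>i\<in>S. 1 \<le> e i"
  shows "(\<Sum>i\<in>S. (2::real) ^ e i) \<le> 2 ^ (\<Sum>i\<in>S. e i)"
  using assms
proof (induction S rule: finite_induct)
  case empty then show ?case by simp
next
  case (insert x S)
  show ?case
  proof (cases "S = {}")
    case True then show ?thesis by simp
  next
    case False
    have IH: "(\<Sum>i\<in>S. (2::real) ^ e i) \<le> 2 ^ (\<Sum>i\<in>S. e i)" using insert by simp
    have E1: "1 \<le> (\<Sum>i\<in>S. e i)"
    proof -
      obtain y where "y \<in> S" using False by blast
      then have "e y \<le> (\<Sum>i\<in>S. e i)" using insert(1) by (intro member_le_sum) auto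
      then show ?thesis using insert(4) \<open>y \<in> S\<close> by fastforce
    qed
    have ex: "1 \<le> e x" using insert by simp
    define a where "a = e x"
    define b where "b = (\<Sum>i\<in>S. e i)"
    have "(2::real) ^ a + 2 ^ b \<le> 2 ^ (a + b)"
    proof -
      have "(1::real) \<le> 2 ^ a - 1" "(1::real) \<le> 2 ^ b - 1"
        using ex E1 unfolding a_def b_def
        by (smt (verit) one_le_power power_increasing power_one_right)+
      then have "(1::real) \<le> (2 ^ a - 1) * (2 ^ b - 1)" by (metis mult_mono' mult_1 zero_le_one order_trans)
      then show ?thesis by (simp add: power_add algebra_simps)
    qed
    then show ?thesis using IH insert(1,2) unfolding a_def b_def by simp
  qed
qed

lemma two_pow_ge:
  assumes e: "0 < \<epsilon>" and d: "int d \<ge> \<lceil>log 2 c\<rceil>" and c: "0 < c"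
  shows "c \<le> 2 ^ d"
proof -
  have "log 2 c \<le> real d" using d by linarith
  then have "2 powr (log 2 c) \<le> 2 powr (real d)" by simp
  then show ?thesis using c by (simp add: powr_realpow)
qed

lemma arith_R:
  fixes \<epsilon> :: real and P :: "nat set" and a :: "nat \<Rightarrow> nat"
  assumes P: "finite P" "\<forall>p\<in>P. prime p" and a: "\<forall>p\<in>P. a p \<le> r"
    and e: "0 < \<epsilon>" "\<epsilon> < 1" and h: "int h \<ge> int r + \<lceil>log 2 (2 / \<epsilon>)\<rceil>"
  shows "(\<Sum>p\<in>P. (real p ^ a p - 1) / ((real p - 1) * real p ^ h)) \<le> \<epsilon>"
proof -
  have "2 < 2 / \<epsilon>" using e by (simp add: field_simps)
  then have l1: "1 < log 2 (2 / \<epsilon>)" using e by (simp add: less_log_iff)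
  define d where "d = h - r"
  have hd: "h = r + d" "int d \<ge> \<lceil>log 2 (2 / \<epsilon>)\<rceil>" using h l1 unfolding d_def by linarith+
  have d1: "1 \<le> d" using hd(2) l1 by linarith
  have 2: "2 / \<epsilon> \<le> 2 ^ d" by (rule two_pow_ge[OF e(1) hd(2)]) (use e in simp)
  define g where "g p = 1 / ((real p - 1) * real p ^ d)" for p :: nat
  have trm: "(real p ^ a p - 1) / ((real p - 1) * real p ^ h) \<le> g p" if p: "p \<in> P" for p
  proof -
    have p2: "2 \<le> p" using P p prime_ge_2_nat by blast
    have "real p ^ a p \<le> real p ^ r" using a p p2 by (intro power_increasing) auto
    then have "real p ^ a p - 1 \<le> real p ^ r" by linarith
    then have "(real p ^ a p - 1) / ((real p - 1) * real p ^ h) \<le> real p ^ r / ((real p - 1) * real p ^ h)"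
      using p2 by (intro divide_right_mono) auto
    also have "\<dots> = g p" unfolding g_def hd(1) using p2 by (simp add: power_add field_simps)
    finally show ?thesis .
  qed
  have "(\<Sum>p\<in>P. (real p ^ a p - 1) / ((real p - 1) * real p ^ h)) \<le> (\<Sum>p\<in>P. g p)"
    using trm by (rule sum_mono)
  also have "\<dots> = (\<Sum>p\<in>P \<inter> {2}. g p) + (\<Sum>p\<in>P - {2}. g p)"
    using P(1) by (metis Diff_eq sum.Int_Diff)
  also have "(\<Sum>p\<in>P \<inter> {2}. g p) \<le> 1 / 2 ^ d"
    by (cases "2 \<in> P") (auto simp: g_def)
  also have "(\<Sum>p\<in>P - {2}. g p) \<le> (\<Sum>p\<in>P - {2}. 1 / ((real p - 1) * real p) * (1 / 3 ^ (d - 1)))"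
  proof (rule sum_mono)
    fix p assume p: "p \<in> P - {2}"
    have "2 \<le> p" "p \<noteq> 2" using P prime_ge_2_nat p by auto
    then have p3: "3 \<le> p" by linarith
    have "real p ^ d = real p * real p ^ (d - 1)" using d1 by (metis Suc_diff_1 less_le_trans power_Suc zero_less_one)
    moreover have "(3::real) ^ (d - 1) \<le> real p ^ (d - 1)" using p3 by (intro power_mono) auto
    ultimately have "(real p - 1) * real p * 3 ^ (d - 1) \<le> (real p - 1) * real p ^ d"
      using p3 by (simp add: mult_left_mono)
    then show "g p \<le> 1 / ((real p - 1) * real p) * (1 / 3 ^ (d - 1))"
      unfolding g_def using p3 by (simp add: field_simps frac_le)
  qed
  also have "\<dots> = (\<Sum>p\<in>P - {2}. 1 / ((real p - 1) * real p)) * (1 / 3 ^ (d - 1))"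
    by (rule sum_distrib_right[symmetric])
  also have "(\<Sum>p\<in>P - {2}. 1 / ((real p - 1) * real p)) \<le> 1/2"
  proof -
    define M where "M = max 2 (Max (insert 2 P))"
    have sub: "P - {2} \<subseteq> {3..M}"
    proof
      fix p assume p: "p \<in> P - {2}"
      have "2 \<le> p" "p \<noteq> 2" using P prime_ge_2_nat p by auto
      then have "3 \<le> p" by linarith
      moreover have "p \<le> M" unfolding M_def using p P(1) by (simp add: Max_ge_iff)
      ultimately show "p \<in> {3..M}" by simp
    qed
    have "(\<Sum>p\<in>P - {2}. 1 / ((real p - 1) * real p)) \<le> (\<Sum>p\<in>{3..M}. 1 / ((real p - 1) * real p))"
      by (rule sum_mono2[OF _ sub]) auto
    also have "\<dots> = 1/2 - 1 / real M" by (rule tele) (simp add: M_def)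
    also have "\<dots> \<le> 1/2" by simp
    finally show ?thesis .
  qed
  finally have "(\<Sum>p\<in>P. (real p ^ a p - 1) / ((real p - 1) * real p ^ h)) \<le> 1 / 2 ^ d + 1 / 2 * (1 / 3 ^ (d - 1))"
    by (simp add: divide_right_mono)
  also have "\<dots> \<le> 2 / 2 ^ d"
  proof -
    have "(2::real) ^ (d - 1) \<le> 3 ^ (d - 1)" by (intro power_mono) auto
    moreover have "(2::real) ^ d = 2 * 2 ^ (d - 1)" using d1 by (metis Suc_diff_1 less_le_trans power_Suc zero_less_one)
    ultimately have "1 / 2 * (1 / 3 ^ (d - 1)) \<le> (1::real) / 2 ^ d"
      by (simp add: field_simps)
    then show ?thesis by simp
  qed
  also have "\<dots> \<le> \<epsilon>" using 2 e by (simp add: field_simps)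
  finally show ?thesis .
qed

definition Om :: "nat \<Rightarrow> nat" where
  "Om n = (\<Sum>p\<in>prime_factors n. multiplicity p n)"

lemma Om_size: "Om n = size (prime_factorization n)"
  unfolding Om_def size_multiset_overloaded_eq
  by (intro sum.cong refl) (simp add: count_prime_factorization_prime in_prime_factors_imp_prime)

lemma Om_mult: "0 < a \<Longrightarrow> 0 < b \<Longrightarrow> Om (a * b) = Om a + Om b"
  unfolding Om_size by (simp add: prime_factorization_mult)

lemma sum_mult_le_Om:
  assumes P: "finite P" "\<forall>p\<in>P. prime p" and n: "0 < n"
  shows "(\<Sum>p\<in>P. multiplicity p n) \<le> Om n"
proof -
  have "(\<Sum>p\<in>P. multiplicity p n) = (\<Sum>p\<in>P \<inter> prime_factors n. multiplicity p n)"
  proof (rule sum.mono_neutral_right[OF P(1)])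
    show "P \<inter> prime_factors n \<subseteq> P" by auto
    show "\<forall>i\<in>P - P \<inter> prime_factors n. multiplicity i n = 0"
      using P n by (auto simp: prime_factors_multiplicity)
  qed
  also have "\<dots> \<le> (\<Sum>p\<in>prime_factors n. multiplicity p n)"
    by (rule sum_mono2) auto
  finally show ?thesis unfolding Om_def .
qed

lemma arith_L:
  fixes \<epsilon> :: real and P :: "nat set" and a :: "nat \<Rightarrow> nat"
  assumes P: "finite P" "\<forall>p\<in>P. prime p" and a: "\<forall>p\<in>P. p ^ a p dvd n" and n: "0 < n"
    and e: "0 < \<epsilon>" "\<epsilon> < 1" and h: "int h \<ge> int (Om n) + \<lceil>log 2 (1 / \<epsilon>)\<rceil>"
  shows "(\<Sum>p\<in>P. (real p ^ a p - 1) / ((real p - 1) * real p ^ h)) \<le> \<epsilon>"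
proof -
  define L where "L = Om n"
  have l0: "0 < log 2 (1 / \<epsilon>)" using e by simp
  have hL: "L \<le> h" "int (h - L) \<ge> \<lceil>log 2 (1 / \<epsilon>)\<rceil>" using h l0 unfolding L_def by linarith+
  have aleq: "(\<Sum>p\<in>P. a p) \<le> L"
  proof -
    have "(\<Sum>p\<in>P. a p) \<le> (\<Sum>p\<in>P. multiplicity p n)"
      using P a n by (intro sum_mono multiplicity_geI) (auto simp: prime_gt_1_nat)
    also have "\<dots> \<le> L" unfolding L_def by (rule sum_mult_le_Om[OF P n])
    finally show ?thesis .
  qed
  define P' where "P' = {p\<in>P. 1 \<le> a p}"
  have fP': "finite P'" using P unfolding P'_def by simp
  have trm: "(real p ^ a p - 1) / ((real p - 1) * real p ^ h) \<le> (if p \<in> P' then 2 ^ a p / 2 ^ h else 0)"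
    if p: "p \<in> P" for p
  proof -
    have p2: "2 \<le> p" using P p prime_ge_2_nat by blast
    have ap: "a p \<le> h" using aleq hL member_le_sum[OF p, of a] P(1) by linarith
    show ?thesis
    proof (cases "p \<in> P'")
      case False then have "a p = 0" using p unfolding P'_def by auto
      then show ?thesis using False by simp
    next
      case True
      have "real p ^ h \<le> (real p - 1) * real p ^ h" using p2 by simp
      then have "(real p ^ a p - 1) / ((real p - 1) * real p ^ h) \<le> real p ^ a p / real p ^ h"
        using p2 by (intro frac_le) auto
      also have "\<dots> = 1 / real p ^ (h - a p)" using p2 ap by (simp add: power_diff)
      also have "\<dots> \<le> 1 / 2 ^ (h - a p)" using p2 by (intro divide_left_mono power_mono) auto
      also have "\<dots> = 2 ^ a p / 2 ^ h" using ap by (simp add: power_diff)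
      finally show ?thesis using True by simp
    qed
  qed
  have "(\<Sum>p\<in>P. (real p ^ a p - 1) / ((real p - 1) * real p ^ h)) \<le> (\<Sum>p\<in>P. if p \<in> P' then 2 ^ a p / 2 ^ h else 0)"
    using trm by (rule sum_mono)
  also have "\<dots> = (\<Sum>p\<in>P'. 2 ^ a p / 2 ^ h)"
    using P(1) unfolding P'_def by (simp add: sum.inter_filter[symmetric])
  also have "\<dots> = (\<Sum>p\<in>P'. (2::real) ^ a p) / 2 ^ h" by (simp add: sum_divide_distrib)
  also have "\<dots> \<le> 2 ^ (\<Sum>p\<in>P'. a p) / 2 ^ h"
    using sum_pow2_le[OF fP'] unfolding P'_def by (intro divide_right_mono) auto
  also have "\<dots> \<le> 2 ^ L / 2 ^ h"
  proof -
    have "(\<Sum>p\<in>P'. a p) \<le> (\<Sum>p\<in>P. a p)" using P(1) unfolding P'_def by (intro sum_mono2) auto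
    then show ?thesis using aleq by (intro divide_right_mono power_increasing) auto
  qed
  also have "\<dots> = 1 / 2 ^ (h - L)" using hL by (simp add: power_diff)
  also have "\<dots> \<le> \<epsilon>"
  proof -
    have "1 / \<epsilon> \<le> 2 ^ (h - L)" by (rule two_pow_ge[OF e(1) hL(2)]) (use e in simp)
    then show ?thesis using e by (simp add: field_simps)
  qed
  finally show ?thesis .
qed



lemma card_fibres:
  assumes "finite A"
  shows "card A = (\<Sum>y\<in>g ` A. card {x\<in>A. g x = y})"
proof -
  have "A = (\<Union>y\<in>g ` A. {x\<in>A. g x = y})" by auto
  hence "card A = card (\<Union>y\<in>g ` A. {x\<in>A. g x = y})" by simp
  also have "\<dots> = (\<Sum>y\<in>g ` A. card {x\<in>A. g x = y})"
    by (rule card_UN_disjoint) (use assms in auto)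
  finally show ?thesis .
qed

definition prodset :: "nat \<Rightarrow> (nat \<Rightarrow> nat set) \<Rightarrow> (nat \<Rightarrow> nat) set" where
  "prodset k A = {x. (\<forall>j<k. x j \<in> A j) \<and> (\<forall>j\<ge>k. x j = 0)}"

lemma prodset_Suc:
  "prodset (Suc k) A = (\<lambda>(x,a). x(k:=a)) ` (prodset k A \<times> A k)"
proof (rule set_eqI, rule iffI)
  fix x assume x: "x \<in> prodset (Suc k) A"
  have "x = (\<lambda>(x,a). x(k:=a)) (x(k:=0), x k)" by simp
  moreover have "(x(k:=0), x k) \<in> prodset k A \<times> A k"
    using x unfolding prodset_def by auto
  ultimately show "x \<in> (\<lambda>(x,a). x(k:=a)) ` (prodset k A \<times> A k)" by blast
next
  fix x assume "x \<in> (\<lambda>(x,a). x(k:=a)) ` (prodset k A \<times> A k)"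
  then show "x \<in> prodset (Suc k) A" unfolding prodset_def
    by (auto simp: less_Suc_eq)
qed

lemma prodset_fin_card:
  assumes "\<forall>j<k. finite (A j)"
  shows "finite (prodset k A) \<and> card (prodset k A) = (\<Prod>j<k. card (A j))"
  using assms
proof (induction k)
  case 0
  have "prodset 0 A = {\<lambda>j. 0}" unfolding prodset_def by auto
  then show ?case by simp
next
  case (Suc k)
  have IH: "finite (prodset k A)" "card (prodset k A) = (\<Prod>j<k. card (A j))"
    using Suc by auto
  have fk: "finite (A k)" using Suc.prems by auto
  have inj: "inj_on (\<lambda>(x,a). x(k:=a)) (prodset k A \<times> A k)"
  proof (rule inj_onI, clarify)
    fix x a y b assume x: "x \<in> prodset k A" and y: "y \<in> prodset k A"
      and e: "x(k := a) = y(k := b)"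
    have "a = b" using fun_cong[OF e, of k] by simp
    moreover have "x = y"
    proof
      fix j show "x j = y j"
      proof (cases "j = k")
        case True then show ?thesis using x y unfolding prodset_def by auto
      next
        case False then show ?thesis using fun_cong[OF e, of j] by simp
      qed
    qed
    ultimately show "x = y \<and> a = b" by simp
  qed
  show ?case
    unfolding prodset_Suc
    using IH fk inj by (simp add: card_image card_cartesian_product)
qed

lemma card_Aj:
  assumes p: "prime p" and q: "prime q" and e: "1 \<le> e"
  shows "card {i. i < q ^ e \<and> q ^ e dvd p * i} = (if p dvd q ^ e then p else 1)"
proof (cases "p = q")
  case True
  obtain e' where e': "e = Suc e'" using e by (cases e) auto
  have pp: "0 < p ^ e'" using p prime_gt_0_nat by simp
  have "{i. i < q ^ e \<and> q ^ e dvd p * i} = (\<lambda>c. c * p ^ e') ` {..<p}"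
  proof (rule set_eqI, rule iffI)
    fix i assume "i \<in> {i. i < q ^ e \<and> q ^ e dvd p * i}"
    then have i: "i < p * p ^ e'" "p * p ^ e' dvd p * i" using True e' by auto
    then have "p ^ e' dvd i" using p prime_gt_0_nat by simp
    then obtain c where c: "i = p ^ e' * c" by blast
    then have "c < p" using i(1) pp by (simp add: mult.commute)
    then show "i \<in> (\<lambda>c. c * p ^ e') ` {..<p}" using c by (auto simp: mult.commute)
  next
    fix i assume "i \<in> (\<lambda>c. c * p ^ e') ` {..<p}"
    then obtain c where c: "c < p" "i = c * p ^ e'" by blast
    have "i < p * p ^ e'" using c pp by simp
    moreover have "p * p ^ e' dvd p * i" using c by simp
    ultimately show "i \<in> {i. i < q ^ e \<and> q ^ e dvd p * i}" using True e' by simp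
  qed
  moreover have "inj_on (\<lambda>c. c * p ^ e') {..<p}" using pp by (intro inj_onI) simp
  ultimately show ?thesis using True e by (simp add: card_image)
next
  case False
  have cop: "coprime (q ^ e) p" using primes_coprime[OF q p] False by simp
  have "{i. i < q ^ e \<and> q ^ e dvd p * i} = {0}"
  proof (rule set_eqI, rule iffI)
    fix i assume "i \<in> {i. i < q ^ e \<and> q ^ e dvd p * i}"
    then have "i < q ^ e" "q ^ e dvd i" using coprime_dvd_mult_right_iff[OF cop] by auto
    then show "i \<in> {0}" using nat_dvd_not_less by (cases "i = 0") auto
  next
    fix i :: nat assume "i \<in> {0}" then show "i \<in> {i. i < q ^ e \<and> q ^ e dvd p * i}"
      using q prime_gt_0_nat by simp
  qed
  moreover have "\<not> p dvd q ^ e"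
    using False p q prime_dvd_power_nat primes_dvd_imp_eq by blast
  ultimately show ?thesis by simp
qed

lemma prod_if_const: "finite A \<Longrightarrow> (\<Prod>j\<in>A. if P j then (c::nat) else 1) = c ^ card {j\<in>A. P j}"
  by (simp add: prod.If_cases Int_def conj_commute)

locale gctx =
  fixes N :: "nat \<Rightarrow> nat" and k :: nat
  assumes Npos: "\<And>j. j < k \<Longrightarrow> 0 < N j"
begin

abbreviation "G \<equiv> grp N k"
abbreviation "add \<equiv> gadd N k"
abbreviation "neg \<equiv> gneg N k"

lemma G_prodset: "G = prodset k (\<lambda>j. {..<N j})"
  unfolding grp_def prodset_def by auto

lemma finite_G: "finite G" and card_G: "card G = (\<Prod>j<k. N j)"
  using prodset_fin_card[of k "\<lambda>j. {..<N j}"] G_prodset by auto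

lemma zero_G[simp]: "gzero \<in> G"
  unfolding grp_def gzero_def using Npos by auto

lemma add_G[simp]: "add x y \<in> G"
  unfolding grp_def gadd_def using Npos by auto

lemma neg_G[simp]: "neg x \<in> G"
  unfolding grp_def gneg_def using Npos by auto

lemma add_comm: "add x y = add y x"
  unfolding gadd_def by (auto simp: add.commute)

lemma add_assoc: "add (add x y) z = add x (add y z)"
  unfolding gadd_def by (auto simp: mod_add_left_eq mod_add_right_eq add.assoc)

lemma add_lcomm: "add x (add y z) = add y (add x z)"
  by (metis add_assoc add_comm)

lemmas add_ac = add_assoc add_comm add_lcomm

lemma add_zero[simp]: "x \<in> G \<Longrightarrow> add x gzero = x"
  unfolding gadd_def gzero_def grp_def by auto

lemma zero_add[simp]: "x \<in> G \<Longrightarrow> add gzero x = x"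
  unfolding gadd_def gzero_def grp_def by auto

lemma add_neg[simp]: "x \<in> G \<Longrightarrow> add x (neg x) = gzero"
proof -
  assume x: "x \<in> G"
  have "(x j + (N j - x j) mod N j) mod N j = 0" if "j < k" for j
  proof -
    have "x j < N j" using x that unfolding grp_def by auto
    then have "(x j + (N j - x j) mod N j) mod N j = (x j + (N j - x j)) mod N j"
      by (simp add: mod_add_right_eq)
    also have "\<dots> = 0" using \<open>x j < N j\<close> by simp
    finally show ?thesis .
  qed
  then show ?thesis unfolding gadd_def gneg_def gzero_def by auto
qed

lemma neg_add[simp]: "x \<in> G \<Longrightarrow> add (neg x) x = gzero"
  using add_neg add_comm by metis

lemma neg_add_cancel[simp]: "c \<in> G \<Longrightarrow> x \<in> G \<Longrightarrow> add (neg c) (add c x) = x"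
  by (simp add: add_assoc[symmetric])

lemma add_neg_cancel[simp]: "c \<in> G \<Longrightarrow> x \<in> G \<Longrightarrow> add c (add (neg c) x) = x"
  by (simp add: add_assoc[symmetric])

lemma add_cancel_left:
  assumes "x \<in> G" "y \<in> G" "c \<in> G" "add c x = add c y" shows "x = y"
  by (metis assms neg_add_cancel)

lemma neg_unique:
  assumes "x \<in> G" "y \<in> G" "add x y = gzero" shows "y = neg x"
  by (metis assms add_cancel_left add_neg neg_G)

abbreviation "subgrp S \<equiv> is_subgroup N k S"

lemma sub_G: "subgrp S \<Longrightarrow> S \<subseteq> G" and sub_zero: "subgrp S \<Longrightarrow> gzero \<in> S"
  and sub_add: "subgrp S \<Longrightarrow> x \<in> S \<Longrightarrow> y \<in> S \<Longrightarrow> add x y \<in> S"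
  and sub_neg: "subgrp S \<Longrightarrow> x \<in> S \<Longrightarrow> neg x \<in> S"
  unfolding is_subgroup_def by auto

lemma sub_finite: "subgrp S \<Longrightarrow> finite S"
  using sub_G finite_G finite_subset by blast

lemma G_sub: "subgrp G"
  unfolding is_subgroup_def by auto

primrec smul :: "nat \<Rightarrow> (nat \<Rightarrow> nat) \<Rightarrow> (nat \<Rightarrow> nat)" where
  "smul 0 x = gzero"
| "smul (Suc n) x = add x (smul n x)"

lemma smul_G[simp]: "smul n x \<in> G"
  by (cases n) auto

lemma smul_coord: "smul n x = (\<lambda>j. if j < k then (n * x j) mod N j else 0)"
  by (induction n) (auto simp: gzero_def gadd_def mod_add_right_eq)

lemma smul_plus: "smul (m + n) x = add (smul m x) (smul n x)"
  by (induction m) (auto simp: add_assoc)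

lemma smul_distrib: "smul n (add x y) = add (smul n x) (smul n y)"
  by (induction n) (auto simp: add_ac)

lemma smul_mult: "smul (m * n) x = smul m (smul n x)"
  by (induction m) (auto simp: smul_plus)

lemma smul_one[simp]: "x \<in> G \<Longrightarrow> smul 1 x = x"
  by simp

lemma smul_zero[simp]: "smul n gzero = gzero"
  by (induction n) auto

lemma smul_sub: "subgrp S \<Longrightarrow> x \<in> S \<Longrightarrow> smul n x \<in> S"
  by (induction n) (auto intro: sub_zero sub_add)

lemma smul_comm: "smul m (smul n x) = smul n (smul m x)"
  by (metis smul_mult mult.commute)

definition ch :: "(nat \<Rightarrow> nat) \<Rightarrow> (nat \<Rightarrow> nat) \<Rightarrow> complex" where
  "ch x y = (\<Prod>j<k. cis (2 * pi * real (x j * y j) / real (N j)))"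

lemma ch_sym: "ch x y = ch y x"
  unfolding ch_def by (simp add: mult.commute)

lemma cis_mod:
  assumes "0 < (n::nat)"
  shows "cis (2 * pi * real ((a mod n) * y) / real n) = cis (2 * pi * real (a * y) / real n)"
proof -
  have a: "a = a mod n + n * (a div n)" by simp
  have e: "(a mod n) * y + n * ((a div n) * y) = (a mod n + n * (a div n)) * y"
    by (simp only: add_mult_distrib mult.assoc)
  have "a * y = (a mod n) * y + n * ((a div n) * y)" by (metis e mod_mult_div_eq add.commute)
  hence "real (a * y) = real ((a mod n) * y) + real n * real ((a div n) * y)"
    by (metis of_nat_add of_nat_mult)
  hence "2 * pi * real (a * y) / real n = 2 * pi * real ((a mod n) * y) / real n + 2 * pi * real ((a div n) * y)"
    using assms by (simp add: field_simps)
  hence "cis (2 * pi * real (a * y) / real n) = cis (2 * pi * real ((a mod n) * y) / real n + 2 * pi * real ((a div n) * y))"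
    by (rule arg_cong)
  also have "\<dots> = cis (2 * pi * real ((a mod n) * y) / real n) * cis (2 * pi * real ((a div n) * y))"
    by (rule cis_mult[symmetric])
  also have "cis (2 * pi * real ((a div n) * y)) = 1"
    by (rule cis_multiple_2pi) simp
  finally show ?thesis by simp
qed

lemma ch_add1: "ch (add a b) y = ch a y * ch b y"
proof -
  have "ch (add a b) y = (\<Prod>j<k. cis (2 * pi * real ((a j + b j) * y j) / real (N j)))"
    unfolding ch_def gadd_def
  proof (intro prod.cong refl)
    fix j assume "j \<in> {..<k}"
    then show "cis (2 * pi * real ((if j < k then (a j + b j) mod N j else 0) * y j) / real (N j)) =
      cis (2 * pi * real ((a j + b j) * y j) / real (N j))"
      using cis_mod[OF Npos, of j "a j + b j" "y j"] by simp
  qed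
  also have "\<dots> = (\<Prod>j<k. cis (2 * pi * real (a j * y j) / real (N j)) * cis (2 * pi * real (b j * y j) / real (N j)))"
    by (intro prod.cong) (auto simp: cis_mult algebra_simps add_divide_distrib)
  also have "\<dots> = ch a y * ch b y" unfolding ch_def by (simp add: prod.distrib)
  finally show ?thesis .
qed

lemma ch_add2: "ch y (add a b) = ch y a * ch y b"
  using ch_add1 ch_sym by metis

lemma ch_zero1[simp]: "ch gzero y = 1" and ch_zero2[simp]: "ch y gzero = 1"
  unfolding ch_def gzero_def by auto

lemma ch_smul1: "ch (smul n x) y = ch x y ^ n"
  by (induction n) (auto simp: ch_add1)

lemma ch_smul2: "ch y (smul n x) = ch y x ^ n"
  using ch_smul1 ch_sym by metis

lemma ch_neg1: "x \<in> G \<Longrightarrow> ch (neg x) y * ch x y = 1"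
  by (metis ch_add1 ch_zero1 neg_add)

lemma prod_cis: "finite A \<Longrightarrow> (\<Prod>j\<in>A. cis (g j)) = cis (\<Sum>j\<in>A. g j)"
  by (induction A rule: finite_induct) (auto simp: cis_mult)

lemma ch_pairing: "ch x y = cis (2 * pi * pairing N k x y)"
  unfolding ch_def pairing_def by (simp add: prod_cis sum_distrib_left)

lemma cis_eq_1_iff: "cis (2 * pi * r) = 1 \<longleftrightarrow> r \<in> \<int>"
proof
  assume "cis (2 * pi * r) = 1"
  then have "cos (2 * pi * r) = 1" by (metis cis.simps(1) one_complex.simps(1))
  then obtain n where "2 * pi * r = real_of_int n * 2 * pi" using cos_one_2pi_int by blast
  then have "r = real_of_int n" by simp
  then show "r \<in> \<int>" by simp
next
  assume "r \<in> \<int>" then show "cis (2 * pi * r) = 1" by (rule cis_multiple_2pi)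
qed

lemma pairing_zero_ch: "pairing_zero N k x y \<longleftrightarrow> ch x y = 1"
  unfolding pairing_zero_def ch_pairing cis_eq_1_iff ..

definition perp :: "(nat \<Rightarrow> nat) set \<Rightarrow> (nat \<Rightarrow> nat) set" where
  "perp S = {y \<in> G. \<forall>s\<in>S. ch s y = 1}"

lemma orth:
  assumes S: "subgrp S"
  shows "(\<Sum>s\<in>S. ch s y) = (if \<forall>s\<in>S. ch s y = 1 then of_nat (card S) else 0)"
proof (cases "\<forall>s\<in>S. ch s y = 1")
  case True then show ?thesis by simp
next
  case False
  then obtain s0 where s0: "s0 \<in> S" "ch s0 y \<noteq> 1" by blast
  have SG: "S \<subseteq> G" using sub_G[OF S] .
  have fin: "finite S" using sub_finite[OF S] .
  have inj: "inj_on (add s0) S"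
    using SG s0 by (intro inj_onI) (auto intro: add_cancel_left)
  have into: "add s0 ` S \<subseteq> S" using sub_add[OF S] s0 by auto
  have img: "add s0 ` S = S" using endo_inj_surj[OF fin into inj] .
  have "(\<Sum>s\<in>S. ch s y) = (\<Sum>s\<in>add s0 ` S. ch s y)" using img by simp
  also have "\<dots> = (\<Sum>s\<in>S. ch (add s0 s) y)" by (rule sum.reindex[OF inj, unfolded comp_def])
  also have "\<dots> = ch s0 y * (\<Sum>s\<in>S. ch s y)" by (simp add: ch_add1 sum_distrib_left)
  finally have "(1 - ch s0 y) * (\<Sum>s\<in>S. ch s y) = 0" by (simp add: algebra_simps)
  then have "(\<Sum>s\<in>S. ch s y) = 0" using s0 by simp
  then show ?thesis using False by (simp only: if_False)
qed

lemma perp_sub: "perp S \<subseteq> G" unfolding perp_def by auto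

lemma perp_subgrp: "subgrp (perp S)"
proof -
  have "neg a \<in> perp S" if a: "a \<in> perp S" for a
  proof -
    have aG: "a \<in> G" using a perp_sub by auto
    have "ch s (neg a) = 1" if "s \<in> S" for s
      using ch_neg1[OF aG, of s] a that unfolding perp_def by (auto simp: ch_sym)
    then show ?thesis unfolding perp_def by auto
  qed
  then show ?thesis unfolding is_subgroup_def perp_def by (auto simp: ch_add2)
qed

lemma ch_unit_ne:
  assumes y: "y \<in> G" and j: "j < k" and yj: "y j \<noteq> 0"
  shows "(\<lambda>i. if i = j then 1 else 0) \<in> G" "ch (\<lambda>i. if i = j then 1 else 0) y \<noteq> 1"
proof -
  have yl: "y j < N j" using y j unfolding grp_def by auto
  then have N2: "1 < N j" using yj by auto
  show "(\<lambda>i. if i = j then 1 else 0) \<in> G" unfolding grp_def using j N2 Npos by auto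
  have "ch (\<lambda>i. if i = j then 1 else 0) y = (\<Prod>i<k. if i = j then cis (2 * pi * (real (y j) / real (N j))) else 1)"
    unfolding ch_def by (intro prod.cong) auto
  also have "\<dots> = cis (2 * pi * (real (y j) / real (N j)))" using j by simp
  finally have e: "ch (\<lambda>i. if i = j then 1 else 0) y = cis (2 * pi * (real (y j) / real (N j)))" .
  have "real (y j) / real (N j) \<notin> \<int>"
  proof
    assume "real (y j) / real (N j) \<in> \<int>"
    then obtain n where n: "real (y j) / real (N j) = real_of_int n" by (auto elim: Ints_cases)
    have "0 < real (y j) / real (N j)" using yj N2 by auto
    moreover have "real (y j) / real (N j) < 1" using yl N2 by auto
    ultimately have "0 < n \<and> n < 1" unfolding n by simp
    then show False by linarith
  qed
  then show "ch (\<lambda>i. if i = j then 1 else 0) y \<noteq> 1" unfolding e cis_eq_1_iff .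
qed

lemma perp_G: "perp G = {gzero}"
proof
  show "{gzero} \<subseteq> perp G" unfolding perp_def by auto
  show "perp G \<subseteq> {gzero}"
  proof
    fix y assume y: "y \<in> perp G"
    have yG: "y \<in> G" using y perp_sub by auto
    have "y = gzero"
    proof (rule ccontr)
      assume "y \<noteq> gzero"
      then obtain j where "y j \<noteq> 0" unfolding gzero_def by auto
      moreover then have "j < k" using yG unfolding grp_def by (cases "j < k") (auto simp: grp_def)
      ultimately show False using ch_unit_ne[OF yG] y unfolding perp_def by auto
    qed
    then show "y \<in> {gzero}" by simp
  qed
qed

lemma card_perp:
  assumes S: "subgrp S"
  shows "card S * card (perp S) = card G"
proof -
  have SG: "S \<subseteq> G" using sub_G[OF S] .
  have fin: "finite S" using sub_finite[OF S] .
  have "(\<Sum>t\<in>G. \<Sum>s\<in>S. ch s t) = (\<Sum>t\<in>G. if t \<in> perp S then of_nat (card S) else 0)"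
    by (intro sum.cong refl) (auto simp: orth[OF S] perp_def)
  also have "\<dots> = (\<Sum>t\<in>{t\<in>G. t \<in> perp S}. of_nat (card S))"
    by (rule sum.inter_filter[symmetric]) (rule finite_G)
  also have "{t\<in>G. t \<in> perp S} = perp S" using perp_sub by auto
  finally have 1: "(\<Sum>t\<in>G. \<Sum>s\<in>S. ch s t) = of_nat (card (perp S) * card S)" by simp
  have "(\<Sum>t\<in>G. \<Sum>s\<in>S. ch s t) = (\<Sum>s\<in>S. \<Sum>t\<in>G. ch t s)"
    by (subst sum.swap) (simp add: ch_sym)
  also have "\<dots> = (\<Sum>s\<in>S. if s = gzero then of_nat (card G) else 0)"
  proof (intro sum.cong refl)
    fix s assume s: "s \<in> S"
    have "(\<forall>t\<in>G. ch t s = 1) \<longleftrightarrow> s \<in> perp G" using s SG unfolding perp_def by auto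
    then show "(\<Sum>t\<in>G. ch t s) = (if s = gzero then of_nat (card G) else 0)"
      by (simp add: orth[OF G_sub] perp_G)
  qed
  also have "\<dots> = of_nat (card G)" using fin sub_zero[OF S] by simp
  finally have "of_nat (card (perp S) * card S) = (of_nat (card G) :: complex)" using 1 by simp
  then show ?thesis by (simp only: of_nat_eq_iff mult.commute)
qed

lemma perp_perp:
  assumes S: "subgrp S"
  shows "perp (perp S) = S"
proof -
  have sub: "S \<subseteq> perp (perp S)" using sub_G[OF S] unfolding perp_def by (auto simp: ch_sym)
  have c1: "card S * card (perp S) = card G" using card_perp[OF S] .
  have c2: "card (perp S) * card (perp (perp S)) = card G" using card_perp[OF perp_subgrp] .
  have "0 < card (perp S)"
    using sub_finite[OF perp_subgrp] sub_zero[OF perp_subgrp] card_gt_0_iff by blast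
  moreover have "card (perp S) * card S = card (perp S) * card (perp (perp S))"
    using c1 c2 by (simp add: mult.commute)
  ultimately have "card S = card (perp (perp S))" by simp
  then show ?thesis using card_subset_eq[OF sub_finite[OF perp_subgrp] sub] by simp
qed

lemma coset_sub:
  assumes S: "subgrp S" and t1: "t1 \<in> G" and t2: "t2 \<in> G" and a: "a \<in> S" and b: "b \<in> S"
    and e: "add t1 a = add t2 b"
  shows "add t1 ` S \<subseteq> add t2 ` S"
proof
  fix z assume "z \<in> add t1 ` S"
  then obtain c where c: "c \<in> S" "z = add t1 c" by blast
  have G: "a \<in> G" "b \<in> G" "c \<in> G" using a b c sub_G[OF S] by auto
  have "add t2 (add b (add (neg a) c)) = add (add t2 b) (add (neg a) c)" by (simp add: add_assoc)
  also have "\<dots> = add (add t1 a) (add (neg a) c)" using e by simp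
  also have "\<dots> = add t1 (add a (add (neg a) c))" by (simp add: add_assoc)
  also have "\<dots> = z" using G c by simp
  finally have "z = add t2 (add b (add (neg a) c))" by simp
  moreover have "add b (add (neg a) c) \<in> S" using S a b c by (intro sub_add sub_neg) auto
  ultimately show "z \<in> add t2 ` S" by blast
qed

lemma lagrange:
  assumes S': "subgrp S'" and S: "subgrp S" and sub: "S' \<subseteq> S"
  shows "card S' dvd card S"
proof -
  define C where "C = (\<lambda>t. add t ` S') ` S"
  have SG: "S \<subseteq> G" "S' \<subseteq> G" using sub_G S S' by auto
  have U: "\<Union>C = S"
  proof
    show "\<Union>C \<subseteq> S" unfolding C_def using sub sub_add[OF S] by auto
    show "S \<subseteq> \<Union>C"
    proof
      fix t assume t: "t \<in> S"
      then have "t = add t gzero" using SG by (simp add: subset_iff)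
      then have "t \<in> add t ` S'" using sub_zero[OF S'] by blast
      then show "t \<in> \<Union>C" unfolding C_def using t by blast
    qed
  qed
  have fS: "finite S" using sub_finite[OF S] .
  have "card S' * card C = card (\<Union>C)"
  proof (rule card_partition)
    show "finite C" unfolding C_def using fS by simp
    show "finite (\<Union>C)" using U fS by simp
    fix c assume "c \<in> C"
    then obtain t where t: "t \<in> S" "c = add t ` S'" unfolding C_def by blast
    have "inj_on (add t) S'" using SG t by (intro inj_onI) (auto intro: add_cancel_left)
    then show "card c = card S'" using t card_image by blast
  next
    fix c1 c2 assume c: "c1 \<in> C" "c2 \<in> C" "c1 \<noteq> c2"
    then obtain t1 t2 where t: "t1 \<in> S" "c1 = add t1 ` S'" "t2 \<in> S" "c2 = add t2 ` S'"
      unfolding C_def by blast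
    show "c1 \<inter> c2 = {}"
    proof (rule ccontr)
      assume "c1 \<inter> c2 \<noteq> {}"
      then obtain a b where ab: "a \<in> S'" "b \<in> S'" "add t1 a = add t2 b" using t by auto
      have "c1 \<subseteq> c2" using coset_sub[OF S' _ _ ab] t SG by auto
      moreover have "c2 \<subseteq> c1" using coset_sub[OF S' _ _ ab(2,1) ab(3)[symmetric]] t SG by auto
      ultimately show False using c by auto
    qed
  qed
  then show ?thesis using U by (metis dvd_triv_left)
qed

definition tors :: "nat \<Rightarrow> (nat \<Rightarrow> nat) set \<Rightarrow> (nat \<Rightarrow> nat) set" where
  "tors p S = {x\<in>S. smul p x = gzero}"

lemma neg_zero[simp]: "neg gzero = gzero"
  using neg_unique[of gzero gzero] by simp

lemma smul_neg: "x \<in> G \<Longrightarrow> smul p (neg x) = neg (smul p x)"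
  by (rule neg_unique) (auto simp: smul_distrib[symmetric])

lemma tors_subgrp: "subgrp S \<Longrightarrow> subgrp (tors p S)"
  unfolding is_subgroup_def tors_def
  by (auto simp: smul_distrib smul_neg)

lemma tors_sub: "tors p S \<subseteq> S" unfolding tors_def by auto

lemma smul_img_subgrp:
  assumes S: "subgrp S" shows "subgrp (smul p ` S)"
proof -
  have "neg (smul p x) \<in> smul p ` S" if "x \<in> S" for x
    using that smul_neg[of x p] sub_G[OF S] sub_neg[OF S that] by (metis image_eqI subsetD)
  moreover have "add (smul p x) (smul p y) \<in> smul p ` S" if "x \<in> S" "y \<in> S" for x y
    using that sub_add[OF S] by (metis smul_distrib image_eqI)
  moreover have "gzero \<in> smul p ` S" using sub_zero[OF S] by (metis smul_zero image_eqI)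
  ultimately show ?thesis unfolding is_subgroup_def by auto
qed

lemma fibre_bound:
  assumes S: "subgrp S"
  shows "card S \<le> card (smul p ` S) * card (tors p S)"
proof -
  have fS: "finite S" using sub_finite[OF S] .
  have ft: "finite (tors p S)" using fS tors_sub finite_subset by blast
  have "card S = (\<Sum>y\<in>smul p ` S. card {x\<in>S. smul p x = y})" by (rule card_fibres[OF fS])
  also have "\<dots> \<le> (\<Sum>y\<in>smul p ` S. card (tors p S))"
  proof (rule sum_mono)
    fix y assume "y \<in> smul p ` S"
    then obtain x0 where x0: "x0 \<in> S" "y = smul p x0" by blast
    have x0G: "x0 \<in> G" using x0 sub_G[OF S] by auto
    have "inj_on (\<lambda>x. add x (neg x0)) {x\<in>S. smul p x = y}"
    proof (rule inj_onI)
      fix a b assume a: "a \<in> {x\<in>S. smul p x = y}" and b: "b \<in> {x\<in>S. smul p x = y}"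
        and e: "add a (neg x0) = add b (neg x0)"
      have "a \<in> G" "b \<in> G" using a b sub_G[OF S] by auto
      then show "a = b" using e add_cancel_left[of a b "neg x0"] by (simp add: add_comm)
    qed
    moreover have "(\<lambda>x. add x (neg x0)) ` {x\<in>S. smul p x = y} \<subseteq> tors p S"
    proof clarify
      fix x assume x: "x \<in> S" "y = smul p x"
      have "smul p (add x (neg x0)) = add (smul p x) (neg (smul p x0))"
        using x0G by (simp add: smul_distrib smul_neg)
      also have "\<dots> = gzero" using x x0 by simp
      finally show "add x (neg x0) \<in> tors p S"
        unfolding tors_def using x S x0 by (auto intro: sub_add sub_neg)
    qed
    ultimately show "card {x\<in>S. smul p x = y} \<le> card (tors p S)"
      using card_inj_on_le ft by blast
  qed
  also have "\<dots> = card (smul p ` S) * card (tors p S)" by simp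
  finally show ?thesis .
qed

lemma card_tors_G:
  assumes pp: "\<forall>j<k. \<exists>q e. prime q \<and> e \<ge> 1 \<and> N j = q ^ e" and p: "prime p"
  shows "card (tors p G) = p ^ card {j\<in>{..<k}. p dvd N j}"
proof -
  have "tors p G = prodset k (\<lambda>j. {i. i < N j \<and> N j dvd p * i})"
    unfolding tors_def prodset_def grp_def smul_coord gzero_def
    by (auto simp: fun_eq_iff)
  then have "card (tors p G) = (\<Prod>j<k. card {i. i < N j \<and> N j dvd p * i})"
    using prodset_fin_card[of k] by simp
  also have "\<dots> = (\<Prod>j<k. if p dvd N j then p else 1)"
  proof (intro prod.cong refl)
    fix j assume "j \<in> {..<k}"
    then obtain q e where "prime q" "e \<ge> 1" "N j = q ^ e" using pp by auto
    then show "card {i. i < N j \<and> N j dvd p * i} = (if p dvd N j then p else 1)"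
      using card_Aj[OF p] by simp
  qed
  also have "\<dots> = p ^ card {j\<in>{..<k}. p dvd N j}" by (simp add: prod_if_const)
  finally show ?thesis .
qed

lemma rank_bound:
  assumes p: "prime p" and T: "T \<subseteq> G" "finite T" and span: "gspan N k T = G"
  shows "card {j\<in>{..<k}. p dvd N j} \<le> card T"
proof -
  define P where "P j \<longleftrightarrow> j < k \<and> p dvd N j" for j
  define red where "red x = (\<lambda>j. if P j then x j mod p else 0)" for x :: "nat \<Rightarrow> nat"
  define w where "w c = (\<lambda>j. if P j then nat ((\<Sum>t\<in>T. c t * int (t j)) mod int p) else 0)"
    for c :: "(nat \<Rightarrow> nat) \<Rightarrow> int"
  define rep where "rep x c \<longleftrightarrow> (\<forall>j. P j \<longrightarrow> int (x j) mod int p = (\<Sum>t\<in>T. c t * int (t j)) mod int p)"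
    for x c
  define S where "S = {x\<in>G. \<exists>c. rep x c}"
  have p0: "0 < p" using p prime_gt_0_nat by blast
  have redw: "red x = w c" if "rep x c" for x c
  proof
    fix j show "red x j = w c j"
    proof (cases "P j")
      case True
      then have "int (x j mod p) = (\<Sum>t\<in>T. c t * int (t j)) mod int p"
        using that unfolding rep_def by (simp add: of_nat_mod)
      then show ?thesis unfolding red_def w_def using True by (metis nat_int)
    qed (simp add: red_def w_def)
  qed
  have Nmod: "(a mod N j) mod p = a mod p" if "P j" for a j
    using that unfolding P_def by (simp add: mod_mod_cancel)
  have subS: "subgrp S"
    unfolding is_subgroup_def
  proof (intro conjI ballI)
    show "S \<subseteq> G" unfolding S_def by auto
    have "rep gzero (\<lambda>_. 0)" unfolding rep_def gzero_def by simp
    then show "gzero \<in> S" unfolding S_def by auto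
  next
    fix x y assume x: "x \<in> S" and y: "y \<in> S"
    then obtain c1 c2 where c: "rep x c1" "rep y c2" unfolding S_def by auto
    have "rep (add x y) (\<lambda>t. c1 t + c2 t)" unfolding rep_def
    proof (intro allI impI)
      fix j assume j: "P j"
      then have jk: "j < k" unfolding P_def by simp
      have "int (add x y j) mod int p = int ((x j + y j) mod N j mod p) "
        using jk by (simp add: gadd_def of_nat_mod)
      also have "\<dots> = int ((x j + y j) mod p)" using Nmod[OF j] by simp
      also have "\<dots> = (int (x j) mod int p + int (y j) mod int p) mod int p"
        by (simp add: of_nat_mod mod_add_eq)
      also have "\<dots> = ((\<Sum>t\<in>T. c1 t * int (t j)) mod int p + (\<Sum>t\<in>T. c2 t * int (t j)) mod int p) mod int p"
        using c j unfolding rep_def by simp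
      also have "\<dots> = (\<Sum>t\<in>T. (c1 t + c2 t) * int (t j)) mod int p"
        by (simp add: mod_add_eq distrib_right sum.distrib)
      finally show "int (add x y j) mod int p = (\<Sum>t\<in>T. (c1 t + c2 t) * int (t j)) mod int p" .
    qed
    then show "add x y \<in> S" unfolding S_def by auto
  next
    fix x assume x: "x \<in> S"
    then obtain c1 where c: "rep x c1" unfolding S_def by auto
    have xG: "x \<in> G" using x unfolding S_def by auto
    have "rep (neg x) (\<lambda>t. - c1 t)" unfolding rep_def
    proof (intro allI impI)
      fix j assume j: "P j"
      then have jk: "j < k" and pN: "p dvd N j" unfolding P_def by auto
      have xl: "x j < N j" using xG jk unfolding grp_def by auto
      have "int (neg x j) mod int p = int ((N j - x j) mod N j mod p)"
        using jk by (simp add: gneg_def of_nat_mod)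
      also have "\<dots> = int (N j - x j) mod int p" using Nmod[OF j] by (simp add: of_nat_mod)
      also have "\<dots> = (int (N j) - int (x j)) mod int p" using xl by (simp add: of_nat_diff)
      also have "\<dots> = (int (N j) mod int p - int (x j) mod int p) mod int p" by (simp add: mod_diff_eq)
      also have "int (N j) mod int p = 0" using pN by (simp add: of_nat_mod[symmetric])
      also have "(0 - int (x j) mod int p) mod int p = (- ((\<Sum>t\<in>T. c1 t * int (t j)) mod int p)) mod int p"
        using c j unfolding rep_def by simp
      also have "\<dots> = (\<Sum>t\<in>T. (- c1 t) * int (t j)) mod int p"
        by (simp add: mod_minus_eq sum_negf)
      finally show "int (neg x j) mod int p = (\<Sum>t\<in>T. (- c1 t) * int (t j)) mod int p" .
    qed
    then show "neg x \<in> S" unfolding S_def by auto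
  qed
  have TS: "T \<subseteq> S"
  proof
    fix t assume t: "t \<in> T"
    have "(\<Sum>s\<in>T. (if s = t then 1 else 0) * int (s j)) = int (t j)" for j
    proof -
      have "(\<Sum>s\<in>T. (if s = t then 1 else 0) * int (s j)) = (\<Sum>s\<in>T. if s = t then int (s j) else 0)"
        by (intro sum.cong refl) auto
      also have "\<dots> = int (t j)" using t T(2) by (simp add: sum.delta')
      finally show ?thesis .
    qed
    then have "rep t (\<lambda>s. if s = t then 1 else 0)" unfolding rep_def by simp
    then show "t \<in> S" unfolding S_def using t T by auto
  qed
  have GS: "G \<subseteq> S" using span subS TS unfolding gspan_def by blast
  have redG: "red ` G \<subseteq> range w" using GS redw unfolding S_def by blast
  define Pi where "Pi = PiE T (\<lambda>_. {0..<int p})"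
  have rng: "range w = w ` Pi"
  proof
    show "w ` Pi \<subseteq> range w" by auto
    show "range w \<subseteq> w ` Pi"
    proof
      fix z assume "z \<in> range w"
      then obtain c where z: "z = w c" by auto
      define c' where "c' = restrict (\<lambda>t. c t mod int p) T"
      have "c' \<in> Pi" unfolding c'_def Pi_def using p0 by auto
      moreover have "w c' = w c"
      proof -
        have eqj: "(\<Sum>t\<in>T. c' t * int (t j)) mod int p = (\<Sum>t\<in>T. c t * int (t j)) mod int p" for j
        proof -
          have "(\<Sum>t\<in>T. c' t * int (t j)) mod int p = (\<Sum>t\<in>T. (c' t * int (t j)) mod int p) mod int p"
            by (simp add: mod_sum_eq)
          also have "\<dots> = (\<Sum>t\<in>T. (c t * int (t j)) mod int p) mod int p"
          proof -
            have "(\<Sum>t\<in>T. (c' t * int (t j)) mod int p) = (\<Sum>t\<in>T. (c t * int (t j)) mod int p)"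
            proof (rule sum.cong[OF refl])
              fix t assume "t \<in> T"
              then have "c' t = c t mod int p" unfolding c'_def by simp
              then show "c' t * int (t j) mod int p = c t * int (t j) mod int p"
                by (simp add: mod_mult_left_eq)
            qed
            then show ?thesis by simp
          qed
          also have "\<dots> = (\<Sum>t\<in>T. c t * int (t j)) mod int p" by (simp add: mod_sum_eq)
          finally show ?thesis .
        qed
        show ?thesis unfolding w_def by (rule ext) (simp only: eqj)
      qed
      ultimately show "z \<in> w ` Pi" using z by (metis image_eqI)
    qed
  qed
  have finPi: "finite Pi" unfolding Pi_def using T(2) by (simp add: finite_PiE)
  have cardPi: "card Pi = p ^ card T" unfolding Pi_def using T(2) by (simp add: card_PiE)
  define Z where "Z = prodset k (\<lambda>j. if p dvd N j then {..<p} else {0})"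
  have ZG: "Z \<subseteq> red ` G"
  proof
    fix z assume z: "z \<in> Z"
    have "z j < N j" if "j < k" for j
    proof (cases "p dvd N j")
      case True
      then have "p \<le> N j" using Npos[OF that] dvd_imp_le by blast
      then show ?thesis using z True that unfolding Z_def prodset_def by fastforce
    next
      case False then show ?thesis using z Npos[OF that] that unfolding Z_def prodset_def by auto
    qed
    then have zG: "z \<in> G" using z unfolding Z_def prodset_def grp_def by auto
    have "red z = z"
    proof
      fix j show "red z j = z j"
        using z unfolding red_def Z_def prodset_def P_def by (cases "j < k") auto
    qed
    then show "z \<in> red ` G" using zG by (metis image_eqI)
  qed
  have cardZ: "card Z = p ^ card {j\<in>{..<k}. p dvd N j}"
    using prodset_fin_card[of k "\<lambda>j. if p dvd N j then {..<p} else {0}"]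
    unfolding Z_def
  proof -
    have "card (prodset k (\<lambda>j. if p dvd N j then {..<p} else {0})) = (\<Prod>j<k. card (if p dvd N j then {..<p} else {0}))"
      using prodset_fin_card[of k "\<lambda>j. if p dvd N j then {..<p} else {0}"] by simp
    also have "\<dots> = (\<Prod>j<k. if p dvd N j then p else 1)" by (intro prod.cong) auto
    also have "\<dots> = p ^ card {j\<in>{..<k}. p dvd N j}" by (rule prod_if_const) simp
    finally show "card (prodset k (\<lambda>j. if p dvd N j then {..<p} else {0})) = p ^ card {j\<in>{..<k}. p dvd N j}" .
  qed
  have "p ^ card {j\<in>{..<k}. p dvd N j} \<le> card (red ` G)"
    using cardZ card_mono[OF _ ZG] finite_G by simp
  also have "\<dots> \<le> card (w ` Pi)" using redG rng finPi by (metis card_mono finite_imageI)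
  also have "\<dots> \<le> p ^ card T" using card_image_le[OF finPi] cardPi by simp
  finally show ?thesis using p prime_gt_1_nat power_le_imp_le_exp by blast
qed

end

locale hctx = gctx +
  fixes K :: "(nat \<Rightarrow> nat) set"
  assumes K: "is_subgroup N k K"
begin

abbreviation "H \<equiv> perp K"

lemma KG: "K \<subseteq> G" using sub_G[OF K] .
lemma H_perp: "perp H = K" using perp_perp[OF K] .
lemma H_sub: "subgrp H" by (rule perp_subgrp)
lemma HG: "H \<subseteq> G" by (rule perp_sub)
lemma card_KH: "card K * card H = card G" using card_perp[OF K] .
lemma finH: "finite H" using sub_finite[OF H_sub] .
lemma finK: "finite K" using sub_finite[OF K] .
lemma HK_one: "t \<in> H \<Longrightarrow> x \<in> K \<Longrightarrow> ch t x = 1"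
  unfolding perp_def by (auto simp: ch_sym)

definition B :: "nat \<Rightarrow> (nat \<Rightarrow> nat) set" where
  "B p = {x\<in>G. smul p x \<in> K}"

lemma K_B: "K \<subseteq> B p" unfolding B_def using KG smul_sub[OF K] by auto

lemma B_perp: "B p \<subseteq> perp (smul p ` H)"
proof
  fix x assume x: "x \<in> B p"
  have "ch s x = 1" if "s \<in> smul p ` H" for s
  proof -
    obtain t where t: "t \<in> H" "s = smul p t" using \<open>s \<in> smul p ` H\<close> by blast
    have "ch s x = ch t x ^ p" using t by (simp add: ch_smul1)
    also have "\<dots> = ch t (smul p x)" by (simp add: ch_smul2)
    also have "\<dots> = 1" using HK_one[OF t(1)] x unfolding B_def by auto
    finally show ?thesis .
  qed
  then show "x \<in> perp (smul p ` H)" using x unfolding B_def perp_def by auto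
qed

lemma card_B: "card (B p) \<le> card K * card (tors p H)"
proof -
  have sH: "subgrp (smul p ` H)" by (rule smul_img_subgrp[OF H_sub])
  have c1: "card (smul p ` H) * card (perp (smul p ` H)) = card G" by (rule card_perp[OF sH])
  have c2: "card (B p) \<le> card (perp (smul p ` H))"
    using B_perp sub_finite[OF perp_subgrp] card_mono by blast
  have c3: "card H \<le> card (smul p ` H) * card (tors p H)" by (rule fibre_bound[OF H_sub])
  have pos: "0 < card (smul p ` H)"
    using sub_finite[OF sH] sub_zero[OF sH] card_gt_0_iff by blast
  have "card (smul p ` H) * card (B p) \<le> card (smul p ` H) * card (perp (smul p ` H))"
    using c2 by simp
  also have "\<dots> = card K * card H" using c1 card_KH by simp
  also have "\<dots> \<le> card K * (card (smul p ` H) * card (tors p H))" using c3 by simp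
  also have "\<dots> = card (smul p ` H) * (card K * card (tors p H))" by simp
  finally show ?thesis using pos by simp
qed

lemma tors_H_pow:
  assumes pp: "\<forall>j<k. \<exists>q e. prime q \<and> e \<ge> 1 \<and> N j = q ^ e" and p: "prime p"
  shows "\<exists>a. card (tors p H) = p ^ a \<and> a \<le> card {j\<in>{..<k}. p dvd N j} \<and> p ^ a dvd card H"
proof -
  have "card (tors p H) dvd card (tors p G)"
    by (rule lagrange[OF tors_subgrp[OF H_sub] tors_subgrp[OF G_sub]]) (use HG in \<open>auto simp: tors_def\<close>)
  then obtain a where a: "a \<le> card {j\<in>{..<k}. p dvd N j}" "card (tors p H) = p ^ a"
    using card_tors_G[OF pp p] divides_primepow_nat[OF p] by auto
  have "card (tors p H) dvd card H"
    by (rule lagrange[OF tors_subgrp[OF H_sub] H_sub tors_sub])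
  then show ?thesis using a by auto
qed

lemma smul_notin:
  assumes p: "prime p" and y: "y \<in> G" "y \<notin> K" "smul p y \<in> K" and a: "0 < a" "a < p"
  shows "smul a y \<notin> K"
proof
  assume ay: "smul a y \<in> K"
  have "\<not> p dvd a" using a by (auto dest: dvd_imp_le)
  then have "coprime p a" using prime_imp_coprime[OF p] by blast
  then have g: "gcd a p = 1" by (simp add: coprime_iff_gcd_eq_1 gcd.commute)
  obtain u v where uv: "a * u = p * v + gcd a p" using bezout_nat[of a p] a by auto
  have "smul (a * u) y = smul (v * p + 1) y" using uv g by (simp add: mult.commute)
  then have "smul u (smul a y) = add (smul v (smul p y)) y"
    using y by (simp add: smul_mult[symmetric] smul_plus mult.commute add_comm)
  moreover have "smul u (smul a y) \<in> K" using smul_sub[OF K ay] .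
  moreover have z: "smul v (smul p y) \<in> K" using smul_sub[OF K y(3)] .
  ultimately have "add (neg (smul v (smul p y))) (add (smul v (smul p y)) y) \<in> K"
    using sub_add[OF K] sub_neg[OF K] by metis
  then have "y \<in> K" using y by simp
  then show False using y by simp
qed

lemma count_perp_x:
  assumes p: "prime p" and x: "x \<in> B p" "x \<notin> K"
  shows "p * card {t\<in>H. ch t x = 1} = card H"
proof -
  have xG: "x \<in> G" using x unfolding B_def by auto
  have px: "smul p x \<in> K" using x unfolding B_def by auto
  have "(\<Sum>a<p. \<Sum>t\<in>H. ch t (smul a x)) = (\<Sum>a<p. if a = 0 then of_nat (card H) else 0)"
  proof (intro sum.cong refl)
    fix a assume a: "a \<in> {..<p}"
    have "(\<forall>t\<in>H. ch t (smul a x) = 1) \<longleftrightarrow> smul a x \<in> perp H" unfolding perp_def by auto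
    also have "\<dots> \<longleftrightarrow> smul a x \<in> K" using H_perp by simp
    also have "\<dots> \<longleftrightarrow> a = 0"
      using smul_notin[OF p xG x(2) px, of a] a sub_zero[OF K] by (cases "a = 0") auto
    finally show "(\<Sum>t\<in>H. ch t (smul a x)) = (if a = 0 then of_nat (card H) else 0)"
      by (simp add: orth[OF H_sub])
  qed
  also have "\<dots> = of_nat (card H)" using p prime_gt_0_nat by simp
  finally have 1: "(\<Sum>a<p. \<Sum>t\<in>H. ch t (smul a x)) = of_nat (card H)" .
  have "(\<Sum>a<p. \<Sum>t\<in>H. ch t (smul a x)) = (\<Sum>t\<in>H. \<Sum>a<p. ch t x ^ a)"
    by (subst sum.swap) (simp add: ch_smul2)
  also have "\<dots> = (\<Sum>t\<in>H. if ch t x = 1 then of_nat p else 0)"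
  proof (intro sum.cong refl)
    fix t assume t: "t \<in> H"
    have "ch t x ^ p = 1" using HK_one[OF t px] by (simp add: ch_smul2)
    then show "(\<Sum>a<p. ch t x ^ a) = (if ch t x = 1 then of_nat p else 0)"
      by (cases "ch t x = 1") (auto simp: geometric_sum)
  qed
  also have "\<dots> = (\<Sum>t\<in>{t\<in>H. ch t x = 1}. of_nat p)"
    by (rule sum.inter_filter[symmetric, OF finH])
  also have "\<dots> = of_nat (p * card {t\<in>H. ch t x = 1})" by simp
  finally show ?thesis using 1 by (simp only: of_nat_eq_iff)
qed


definition D :: nat where "D = (\<Prod>j<k. N j)"
definition Pset :: "nat set" where "Pset = {p. prime p \<and> p \<le> D}"

lemma finite_Pset: "finite Pset" unfolding Pset_def by simp

lemma D_pos: "0 < D" unfolding D_def using Npos by (simp add: prod_pos)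

lemma smul_D: "smul D x = gzero"
proof -
  have "(D * x j) mod N j = 0" if "j < k" for j
  proof -
    have "N j dvd D" unfolding D_def by (rule dvd_prodI) (use that in auto)
    then show ?thesis by simp
  qed
  then show ?thesis unfolding smul_coord gzero_def by auto
qed

lemma inj_coset:
  assumes p: "prime p" and y: "y \<in> G" "y \<notin> K" "smul p y \<in> K"
    and a: "a \<le> a'" "a' < p" and kk: "\<kappa> \<in> K" "\<kappa>' \<in> K"
    and e: "add (smul a y) \<kappa> = add (smul a' y) \<kappa>'"
  shows "a = a' \<and> \<kappa> = \<kappa>'"
proof -
  have kG: "\<kappa> \<in> G" "\<kappa>' \<in> G" using kk KG by auto
  have sa: "smul a' y = add (smul a y) (smul (a' - a) y)"
    using a smul_plus[of a "a' - a" y] by simp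
  have "add (smul a y) \<kappa> = add (add (smul a y) (smul (a' - a) y)) \<kappa>'"
    using e unfolding sa .
  then have "add (smul a y) \<kappa> = add (smul a y) (add (smul (a' - a) y) \<kappa>')"
    unfolding add_assoc .
  then have e2: "\<kappa> = add (smul (a' - a) y) \<kappa>'" by (rule add_cancel_left[OF kG(1) add_G smul_G])
  have "a = a'"
  proof (rule ccontr)
    assume "a \<noteq> a'"
    then have "0 < a' - a" "a' - a < p" using a by linarith+
    then have nk: "smul (a' - a) y \<notin> K" using smul_notin[OF p y] by blast
    have "add \<kappa> (neg \<kappa>') = add (add (smul (a' - a) y) \<kappa>') (neg \<kappa>')"
      using e2 by simp
    also have "\<dots> = smul (a' - a) y" using kG by (simp only: add_assoc add_neg add_zero smul_G)
    finally have "add \<kappa> (neg \<kappa>') = smul (a' - a) y" .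
    moreover have "add \<kappa> (neg \<kappa>') \<in> K" using kk sub_add[OF K] sub_neg[OF K] by blast
    ultimately show False using nk by simp
  qed
  then have "\<kappa> = add gzero \<kappa>'" using e2 by simp
  then show ?thesis using \<open>a = a'\<close> kG by simp
qed

lemma bad_witness:
  assumes T: "T \<subseteq> H" and ne: "perp T \<noteq> K"
  shows "\<exists>p\<in>Pset. (p - 1) * card K \<le> card ((B p - K) \<inter> perp T)"
proof -
  have KT: "K \<subseteq> perp T" using T KG HK_one unfolding perp_def by blast
  obtain x where x: "x \<in> perp T" "x \<notin> K" using KT ne by blast
  have xG: "x \<in> G" using x perp_sub by auto
  define m where "m = (LEAST m. 0 < m \<and> smul m x \<in> K)"
  have ex: "0 < D \<and> smul D x \<in> K" using D_pos smul_D sub_zero[OF K] by simp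
  have m: "0 < m" "smul m x \<in> K" using LeastI_ex[of "\<lambda>m. 0 < m \<and> smul m x \<in> K"] ex
    unfolding m_def by blast+
  have mD: "m \<le> D" unfolding m_def using ex by (rule Least_le)
  have "m \<noteq> 1" using m x xG by auto
  then obtain p where p: "prime p" "p dvd m" using prime_factor_nat by blast
  then obtain q where q: "m = p * q" by blast
  have p1: "1 < p" using p prime_gt_1_nat by blast
  have q0: "0 < q" using q m by auto
  have qm: "q < m" using q p1 q0 by simp
  have yK: "smul q x \<notin> K"
    using not_less_Least[of q "\<lambda>m. 0 < m \<and> smul m x \<in> K"] qm q0 unfolding m_def by blast
  define y where "y = smul q x"
  have py: "smul p y \<in> K" using m q unfolding y_def by (simp add: smul_mult[symmetric] mult.commute)
  have yG: "y \<in> G" unfolding y_def by simp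
  have yT: "y \<in> perp T" unfolding y_def using smul_sub[OF perp_subgrp x(1)] .
  have pP: "p \<in> Pset" unfolding Pset_def using p mD dvd_imp_le[OF p(2) m(1)] by auto
  define \<phi> where "\<phi> = (\<lambda>(a, \<kappa>). add (smul a y) \<kappa>)"
  have inj: "inj_on \<phi> ({1..<p} \<times> K)"
  proof (rule inj_onI)
    fix u v assume u: "u \<in> {1..<p} \<times> K" and v: "v \<in> {1..<p} \<times> K" and e0: "\<phi> u = \<phi> v"
    obtain a \<kappa> where uu: "u = (a, \<kappa>)" by force
    obtain a' \<kappa>' where vv: "v = (a', \<kappa>')" by force
    have A: "a < p" "a' < p" "\<kappa> \<in> K" "\<kappa>' \<in> K" using u v uu vv by auto
    have e: "add (smul a y) \<kappa> = add (smul a' y) \<kappa>'" using e0 uu vv unfolding \<phi>_def by simp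
    have "a = a' \<and> \<kappa> = \<kappa>'"
    proof (cases "a \<le> a'")
      case True
      then show ?thesis using inj_coset[OF p(1) yG yK[folded y_def] py True A(2) A(3) A(4) e] by simp
    next
      case False
      then show ?thesis using inj_coset[OF p(1) yG yK[folded y_def] py _ A(1) A(4) A(3) e[symmetric]] by simp
    qed
    then show "u = v" using uu vv by simp
  qed
  have into: "\<phi> ` ({1..<p} \<times> K) \<subseteq> (B p - K) \<inter> perp T"
  proof clarify
    fix a \<kappa> assume a: "a \<in> {1..<p}" and kk: "\<kappa> \<in> K"
    have kG: "\<kappa> \<in> G" using kk KG by auto
    have phe: "\<phi> (a, \<kappa>) = add (smul a y) \<kappa>" unfolding \<phi>_def by simp
    have inB: "\<phi> (a, \<kappa>) \<in> B p"
    proof -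
      have "smul p (add (smul a y) \<kappa>) = add (smul a (smul p y)) (smul p \<kappa>)"
        unfolding smul_distrib smul_comm[of p a y] ..
      moreover have "add (smul a (smul p y)) (smul p \<kappa>) \<in> K"
        by (rule sub_add[OF K smul_sub[OF K py] smul_sub[OF K kk]])
      ultimately show ?thesis unfolding B_def phe by simp
    qed
    have nK: "\<phi> (a, \<kappa>) \<notin> K"
    proof
      assume "\<phi> (a, \<kappa>) \<in> K"
      then have "add (add (smul a y) \<kappa>) (neg \<kappa>) \<in> K"
        unfolding phe by (rule sub_add[OF K _ sub_neg[OF K kk]])
      moreover have "add (add (smul a y) \<kappa>) (neg \<kappa>) = smul a y"
        by (simp only: add_assoc add_neg[OF kG] add_zero[OF smul_G])
      ultimately have "smul a y \<in> K" by simp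
      then show False using smul_notin[OF p(1) yG yK[folded y_def] py, of a] a by auto
    qed
    have inT: "\<phi> (a, \<kappa>) \<in> perp T"
      unfolding phe by (rule sub_add[OF perp_subgrp smul_sub[OF perp_subgrp yT]]) (use KT kk in blast)
    show "\<phi> (a, \<kappa>) \<in> (B p - K) \<inter> perp T" using inB nK inT by simp
  qed
  have fin: "finite ((B p - K) \<inter> perp T)" using sub_finite[OF perp_subgrp] by simp
  have "card ({1..<p} \<times> K) \<le> card ((B p - K) \<inter> perp T)"
    using card_inj_on_le[OF inj into fin] .
  then have "(p - 1) * card K \<le> card ((B p - K) \<inter> perp T)" by (simp add: card_cartesian_product)
  then show ?thesis using pP by blast
qed

end



locale qctx = hctx +
  fixes f :: "(nat \<Rightarrow> nat) \<Rightarrow> (nat \<Rightarrow> nat)"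
  assumes fG: "\<forall>x\<in>grp N k. f x \<in> grp N k"
    and fK: "\<forall>x\<in>grp N k. \<forall>y\<in>grp N k. f x = f y \<longleftrightarrow> gsub N k x y \<in> K"
begin

definition sN :: real where "sN = (\<Prod>j<k. sqrt (real (N j)))"

lemma sN_pos: "0 < sN" unfolding sN_def using Npos by (intro prod_pos) auto

lemma sN_sq: "sN ^ 2 = real (card G)"
proof -
  have "sN ^ 2 = (\<Prod>j<k. sqrt (real (N j)) ^ 2)" unfolding sN_def by (simp add: prod_power_distrib)
  also have "\<dots> = (\<Prod>j<k. real (N j))" by (intro prod.cong) auto
  also have "\<dots> = real (card G)" using card_G by simp
  finally show ?thesis .
qed

lemma qft_ch: "qft_entry N k y x = ch x y / of_real sN"
  unfolding qft_entry_def ch_def sN_def by (simp add: prod_dividef)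

lemma qft_init: "QFT_I N k init_state y b = (if b = gzero then 1 / of_real sN else 0)"
proof -
  have "QFT_I N k init_state y b = (\<Sum>x\<in>G. if x = gzero then qft_entry N k y x * (if b = gzero then 1 else 0) else 0)"
    unfolding QFT_I_def apply_first_def init_state_def by (intro sum.cong) auto
  also have "\<dots> = qft_entry N k y gzero * (if b = gzero then 1 else 0)" using finite_G by simp
  finally show ?thesis by (simp add: qft_ch)
qed

lemma uf_step:
  assumes g: "g \<in> G"
  shows "Uf N k f (QFT_I N k init_state) g c = (if f g = c then 1 / of_real sN else 0)"
proof -
  have "Uf N k f (QFT_I N k init_state) g c = (\<Sum>b\<in>G. if b = gzero then (if add b (f g) = c then 1 / of_real sN else 0) else 0)"
    unfolding Uf_def qft_init by (intro sum.cong) auto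
  also have "\<dots> = (if add gzero (f g) = c then 1 / of_real sN else 0)" using finite_G by simp
  finally show ?thesis using fG g by simp
qed

lemma final_eq:
  "final_state N k f t c = (\<Sum>x\<in>{x\<in>G. f x = c}. cnj (ch t x)) / of_real (sN ^ 2)"
proof -
  have "final_state N k f t c = (\<Sum>x\<in>G. if f x = c then cnj (ch t x) / of_real (sN ^ 2) else 0)"
    unfolding final_state_def QFTdag_I_def apply_first_def
  proof (intro sum.cong refl)
    fix x assume x: "x \<in> G"
    show "cnj (qft_entry N k x t) * Uf N k f (QFT_I N k init_state) x c =
          (if f x = c then cnj (ch t x) / of_real (sN ^ 2) else 0)"
      using uf_step[OF x] sN_pos by (simp add: qft_ch power2_eq_square)
  qed
  also have "\<dots> = (\<Sum>x\<in>{x\<in>G. f x = c}. cnj (ch t x) / of_real (sN ^ 2))"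
    by (rule sum.inter_filter[symmetric, OF finite_G])
  also have "\<dots> = (\<Sum>x\<in>{x\<in>G. f x = c}. cnj (ch t x)) / of_real (sN ^ 2)"
    by (simp add: sum_divide_distrib)
  finally show ?thesis .
qed

lemma fibre_eq:
  assumes x0: "x0 \<in> G"
  shows "{x\<in>G. f x = f x0} = add x0 ` K"
proof
  show "{x\<in>G. f x = f x0} \<subseteq> add x0 ` K"
  proof clarify
    fix x assume x: "x \<in> G" "f x = f x0"
    then have "gsub N k x x0 \<in> K" using fK x0 by blast
    then have "add x (neg x0) \<in> K" unfolding gsub_def .
    moreover have "add x0 (add x (neg x0)) = x"
      by (simp only: add_lcomm[of x0 x] add_neg[OF x0] add_zero[OF x(1)])
    then have "x = add x0 (add x (neg x0))" by simp
    ultimately show "x \<in> add x0 ` K" by blast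
  qed
  show "add x0 ` K \<subseteq> {x\<in>G. f x = f x0}"
  proof clarify
    fix \<kappa> assume kk: "\<kappa> \<in> K"
    have kG: "\<kappa> \<in> G" using kk KG by auto
    have "gsub N k (add x0 \<kappa>) x0 = \<kappa>" unfolding gsub_def using x0 kG
      by (simp add: add_comm add_lcomm)
    then have "f (add x0 \<kappa>) = f x0" using fK x0 kk add_G by metis
    then show "add x0 \<kappa> \<in> G \<and> f (add x0 \<kappa>) = f x0" by simp
  qed
qed

lemma inj_addK: "x0 \<in> G \<Longrightarrow> inj_on (add x0) K"
  using KG by (intro inj_onI) (auto intro: add_cancel_left)

lemma card_fG: "card (f ` G) * card K = card G"
proof -
  have "card G = (\<Sum>y\<in>f ` G. card {x\<in>G. f x = y})" by (rule card_fibres[OF finite_G])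
  also have "\<dots> = (\<Sum>y\<in>f ` G. card K)"
  proof (intro sum.cong refl)
    fix y assume "y \<in> f ` G"
    then obtain x0 where x0: "x0 \<in> G" "y = f x0" by blast
    show "card {x\<in>G. f x = y} = card K"
      using fibre_eq[OF x0(1)] x0(2) card_image[OF inj_addK[OF x0(1)]] by simp
  qed
  finally show ?thesis by simp
qed

lemma cmod_ch: "cmod (ch x y) = 1"
  unfolding ch_pairing by simp

lemma sum_fibre:
  assumes t: "t \<in> G" and x0: "x0 \<in> G"
  shows "cmod (\<Sum>x\<in>{x\<in>G. f x = f x0}. cnj (ch t x)) = (if t \<in> H then real (card K) else 0)"
proof -
  have "(\<Sum>x\<in>{x\<in>G. f x = f x0}. cnj (ch t x)) = (\<Sum>x\<in>add x0 ` K. cnj (ch t x))"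
    using fibre_eq[OF x0] by simp
  also have "\<dots> = (\<Sum>\<kappa>\<in>K. cnj (ch t (add x0 \<kappa>)))"
    using sum.reindex[OF inj_addK[OF x0]] by (simp add: comp_def)
  also have "\<dots> = cnj (ch t x0 * (\<Sum>\<kappa>\<in>K. ch \<kappa> t))"
    by (simp add: ch_add2 sum_distrib_left ch_sym)
  finally have e: "(\<Sum>x\<in>{x\<in>G. f x = f x0}. cnj (ch t x)) = cnj (ch t x0 * (\<Sum>\<kappa>\<in>K. ch \<kappa> t))" .
  have "(\<forall>\<kappa>\<in>K. ch \<kappa> t = 1) \<longleftrightarrow> t \<in> H" using t unfolding perp_def by auto
  then show ?thesis unfolding e using orth[OF K, of t]
    by (simp add: norm_mult cmod_ch)
qed

lemma outcome:
  assumes t: "t \<in> G"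
  shows "outcome_prob N k f t = (if t \<in> H then 1 / real (card H) else 0)"
proof -
  define X where "X = (if t \<in> H then real (card K) ^ 2 / real (card G) ^ 2 else 0)"
  have "outcome_prob N k f t = (\<Sum>c\<in>G. if c \<in> f ` G then X else 0)"
    unfolding outcome_prob_def
  proof (intro sum.cong refl)
    fix c assume c: "c \<in> G"
    show "(cmod (final_state N k f t c))\<^sup>2 = (if c \<in> f ` G then X else 0)"
    proof (cases "c \<in> f ` G")
      case True
      then obtain x0 where x0: "x0 \<in> G" "c = f x0" by blast
      have "cmod (final_state N k f t c) = cmod (\<Sum>x\<in>{x\<in>G. f x = f x0}. cnj (ch t x)) / sN ^ 2"
        unfolding final_eq x0(2) using sN_pos by (simp add: norm_divide norm_power)
      then show ?thesis using True sum_fibre[OF t x0(1)] sN_sq unfolding X_def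
        by (simp add: power_divide)
    next
      case False
      then have e: "{x\<in>G. f x = c} = {}" by auto
      show ?thesis using False unfolding final_eq e by simp
    qed
  qed
  also have "\<dots> = (\<Sum>c\<in>{c\<in>G. c \<in> f ` G}. X)"
    by (rule sum.inter_filter[symmetric, OF finite_G])
  also have "\<dots> = (\<Sum>c\<in>f ` G. X)"
    using fG by (intro arg_cong[where f="\<lambda>A. sum (\<lambda>c. X) A"]) auto
  also have "\<dots> = real (card (f ` G)) * X" by simp
  also have "\<dots> = (if t \<in> H then 1 / real (card H) else 0)"
  proof -
    have K0: "0 < card K" using finK sub_zero[OF K] card_gt_0_iff by blast
    have H0: "0 < card H" using finH sub_zero[OF H_sub] card_gt_0_iff by blast
    have "card K * card (f ` G) = card K * card H" using card_fG card_KH by (simp add: mult.commute)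
    then have fH: "card (f ` G) = card H" using K0 by simp
    have GKH: "real (card G) = real (card K) * real (card H)" using card_KH by (metis of_nat_mult)
    show ?thesis unfolding X_def fH GKH using K0 H0
      by (simp add: power2_eq_square field_simps)
  qed
  finally show ?thesis .
qed

end



context qctx
begin

lemma prodlist:
  "set ts \<subseteq> G \<Longrightarrow> prod_list (map (outcome_prob N k f) ts) = (if set ts \<subseteq> H then (1 / real (card H)) ^ length ts else 0)"
  by (induction ts) (auto simp: outcome)

lemma out_perp: "output_set N k T = perp T"
  unfolding output_set_def perp_def pairing_zero_ch by simp

lemma count_x:
  assumes p: "prime p" and x: "x \<in> B p" "x \<notin> K"
  shows "real (card {ts. set ts \<subseteq> H \<and> length ts = h \<and> x \<in> perp (set ts)}) = (real (card H) / real p) ^ h"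
proof -
  have xG: "x \<in> G" using x unfolding B_def by auto
  have "{ts. set ts \<subseteq> H \<and> length ts = h \<and> x \<in> perp (set ts)} = {ts. set ts \<subseteq> {t\<in>H. ch t x = 1} \<and> length ts = h}"
    using xG unfolding perp_def by auto
  then have "card {ts. set ts \<subseteq> H \<and> length ts = h \<and> x \<in> perp (set ts)} = card {t\<in>H. ch t x = 1} ^ h"
    using card_lists_length_eq[of "{t\<in>H. ch t x = 1}" h] finH by simp
  moreover have "real (card {t\<in>H. ch t x = 1}) = real (card H) / real p"
  proof -
    have "real (p * card {t\<in>H. ch t x = 1}) = real (card H)" using count_perp_x[OF p x] by simp
    then have "real p * real (card {t\<in>H. ch t x = 1}) = real (card H)" by simp
    moreover have "0 < real p" using p prime_gt_0_nat by simp
    ultimately show ?thesis by (simp add: field_simps)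
  qed
  ultimately show ?thesis by simp
qed

lemma card_inter_sum:
  "finite A \<Longrightarrow> real (card (A \<inter> S)) = (\<Sum>x\<in>A. if x \<in> S then 1 else 0)"
proof -
  assume A: "finite A"
  have "(\<Sum>x\<in>A. if x \<in> S then 1 else (0::real)) = (\<Sum>x\<in>{x\<in>A. x \<in> S}. 1)"
    by (rule sum.inter_filter[symmetric, OF A])
  also have "{x\<in>A. x \<in> S} = A \<inter> S" by auto
  finally show ?thesis by simp
qed

lemma sum_bad_term:
  assumes p: "prime p"
  shows "(\<Sum>ts\<in>{ts. set ts \<subseteq> H \<and> length ts = h}. real (card ((B p - K) \<inter> perp (set ts))))
          = real (card (B p - K)) * (real (card H) / real p) ^ h"
proof -
  define L where "L = {ts. set ts \<subseteq> H \<and> length ts = h}"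
  have fL: "finite L" unfolding L_def using finH by (simp add: finite_lists_length_eq)
  have fB: "finite (B p - K)" unfolding B_def using finite_G by simp
  have "(\<Sum>ts\<in>L. real (card ((B p - K) \<inter> perp (set ts)))) = (\<Sum>ts\<in>L. \<Sum>x\<in>B p - K. if x \<in> perp (set ts) then 1 else 0)"
    using card_inter_sum[OF fB] by simp
  also have "\<dots> = (\<Sum>x\<in>B p - K. \<Sum>ts\<in>L. if x \<in> perp (set ts) then 1 else 0)" by (rule sum.swap)
  also have "\<dots> = (\<Sum>x\<in>B p - K. (real (card H) / real p) ^ h)"
  proof (intro sum.cong refl)
    fix x assume x: "x \<in> B p - K"
    have "(\<Sum>ts\<in>L. if x \<in> perp (set ts) then 1 else (0::real)) = (\<Sum>ts\<in>{ts\<in>L. x \<in> perp (set ts)}. 1)"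
      by (rule sum.inter_filter[symmetric, OF fL])
    also have "{ts\<in>L. x \<in> perp (set ts)} = {ts. set ts \<subseteq> H \<and> length ts = h \<and> x \<in> perp (set ts)}"
      unfolding L_def by auto
    finally show "(\<Sum>ts\<in>L. if x \<in> perp (set ts) then 1 else (0::real)) = (real (card H) / real p) ^ h"
      using count_x[OF p, of x] x by simp
  qed
  also have "\<dots> = real (card (B p - K)) * (real (card H) / real p) ^ h" by simp
  finally show ?thesis unfolding L_def .
qed

lemma gspan_G: "gspan N k G = G"
  unfolding gspan_def using G_sub by blast

lemma m_le_rank:
  assumes p: "prime p"
  shows "card {j\<in>{..<k}. p dvd N j} \<le> grank N k"
proof -
  have ex: "\<exists>n. \<exists>T. T \<subseteq> G \<and> finite T \<and> card T = n \<and> gspan N k T = G"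
    using finite_G gspan_G by blast
  have "\<exists>T. T \<subseteq> G \<and> finite T \<and> card T = (LEAST n. \<exists>T. T \<subseteq> G \<and> finite T \<and> card T = n \<and> gspan N k T = G) \<and> gspan N k T = G"
    by (rule LeastI_ex[OF ex])
  then obtain T where T: "T \<subseteq> G" "finite T" "card T = grank N k" "gspan N k T = G"
    unfolding grank_def by blast
  show ?thesis using rank_bound[OF p T(1,2,4)] T(3) by simp
qed

lemma main:
  assumes pp: "\<forall>j<k. \<exists>q e. prime q \<and> e \<ge> 1 \<and> N j = q ^ e"
    and e: "0 < \<epsilon>" "\<epsilon> < 1"
    and hc: "int h \<ge> int (grank N k) + \<lceil>log 2 (2 / \<epsilon>)\<rceil>
         \<or> int h \<ge> int (glen (grp N k)) - int (glen K) + \<lceil>log 2 (1 / \<epsilon>)\<rceil>"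
  shows "prob_success N k f h K \<ge> 1 - \<epsilon>"
proof -
  define c where "c = 1 / real (card H)"
  define LG where "LG = {ts. length ts = h \<and> set ts \<subseteq> G}"
  define LHs where "LHs = {ts. set ts \<subseteq> H \<and> length ts = h}"
  define good where "good = {ts\<in>LHs. perp (set ts) = K}"
  define bad where "bad = {ts\<in>LHs. perp (set ts) \<noteq> K}"
  have K0: "0 < card K" using finK sub_zero[OF K] card_gt_0_iff by blast
  have H0: "0 < card H" using finH sub_zero[OF H_sub] card_gt_0_iff by blast
  have fLG: "finite LG" unfolding LG_def using finite_G finite_lists_length_eq by (simp add: conj_commute)
  have fLH: "finite LHs" unfolding LHs_def using finH by (simp add: finite_lists_length_eq)
  have goodLG: "good \<subseteq> LG" unfolding good_def LHs_def LG_def using HG by auto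
  have "prob_success N k f h K = (\<Sum>ts\<in>LG. if ts \<in> good then c ^ h else 0)"
    unfolding prob_success_def LG_def[symmetric]
  proof (intro sum.cong refl)
    fix ts assume ts: "ts \<in> LG"
    then have "set ts \<subseteq> G" "length ts = h" unfolding LG_def by auto
    then show "(if output_set N k (set ts) = K then prod_list (map (outcome_prob N k f) ts) else 0) =
               (if ts \<in> good then c ^ h else 0)"
      unfolding out_perp good_def LHs_def c_def by (simp add: prodlist)
  qed
  also have "\<dots> = (\<Sum>ts\<in>{ts\<in>LG. ts \<in> good}. c ^ h)" by (rule sum.inter_filter[symmetric, OF fLG])
  also have "{ts\<in>LG. ts \<in> good} = good" using goodLG by auto
  finally have ps: "prob_success N k f h K = real (card good) * c ^ h" by simp
  have cardLH: "card LHs = card H ^ h" unfolding LHs_def using card_lists_length_eq[OF finH] by simp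
  have gb: "card good + card bad = card LHs"
  proof -
    have "LHs = good \<union> bad" "good \<inter> bad = {}" unfolding good_def bad_def by auto
    moreover have "finite good" "finite bad" using fLH unfolding good_def bad_def by auto
    ultimately show ?thesis using card_Un_disjoint[of good bad] by simp
  qed
  have "\<forall>p\<in>Pset. \<exists>a. card (tors p H) = p ^ a \<and> a \<le> card {j\<in>{..<k}. p dvd N j} \<and> p ^ a dvd card H"
  proof
    fix p assume "p \<in> Pset"
    then have "prime p" unfolding Pset_def by simp
    then show "\<exists>a. card (tors p H) = p ^ a \<and> a \<le> card {j\<in>{..<k}. p dvd N j} \<and> p ^ a dvd card H"
      by (rule tors_H_pow[OF pp])
  qed
  then have "\<exists>a. \<forall>p\<in>Pset. card (tors p H) = p ^ a p \<and> a p \<le> card {j\<in>{..<k}. p dvd N j} \<and> p ^ a p dvd card H"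
    by (rule bchoice)
  then obtain a where a0: "\<forall>p\<in>Pset. card (tors p H) = p ^ a p \<and> a p \<le> card {j\<in>{..<k}. p dvd N j} \<and> p ^ a p dvd card H"
    by (elim exE)
  have a: "\<And>p. p \<in> Pset \<Longrightarrow> card (tors p H) = p ^ a p \<and> a p \<le> card {j\<in>{..<k}. p dvd N j} \<and> p ^ a p dvd card H"
    using a0 by (rule bspec)
  have Pprime: "\<forall>p\<in>Pset. prime p" unfolding Pset_def by auto
  define Fb where "Fb ts = (\<Sum>p\<in>Pset. real (card ((B p - K) \<inter> perp (set ts))) / (real (p - 1) * real (card K)))" for ts
  have Fb_nonneg: "0 \<le> Fb ts" for ts unfolding Fb_def by (intro sum_nonneg) auto
  have Fb_bad: "1 \<le> Fb ts" if ts: "ts \<in> bad" for ts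
  proof -
    have "set ts \<subseteq> H" "perp (set ts) \<noteq> K" using ts unfolding bad_def LHs_def by auto
    then have "\<exists>p\<in>Pset. (p - 1) * card K \<le> card ((B p - K) \<inter> perp (set ts))" by (rule bad_witness)
    then obtain p where p: "p \<in> Pset" "(p - 1) * card K \<le> card ((B p - K) \<inter> perp (set ts))"
      by (elim bexE)
    have p2: "2 \<le> p" using p Pprime prime_ge_2_nat by blast
    have pos: "0 < real (p - 1) * real (card K)" using p2 K0 by simp
    have "real ((p - 1) * card K) \<le> real (card ((B p - K) \<inter> perp (set ts)))"
      using p(2) by (simp only: of_nat_le_iff)
    then have "real (p - 1) * real (card K) \<le> real (card ((B p - K) \<inter> perp (set ts)))" by simp
    then have "1 \<le> real (card ((B p - K) \<inter> perp (set ts))) / (real (p - 1) * real (card K))"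
      using pos by (simp only: le_divide_eq_1_pos)
    also have "\<dots> \<le> Fb ts" unfolding Fb_def
      by (rule member_le_sum[OF p(1)]) (simp_all add: finite_Pset)
    finally show ?thesis .
  qed
  define S where "S = (\<Sum>p\<in>Pset. (real p ^ a p - 1) / ((real p - 1) * real p ^ h))"
  have bad_le: "real (card bad) \<le> real (card H) ^ h * S"
  proof -
    have "real (card bad) = (\<Sum>ts\<in>bad. 1)" by simp
    also have "\<dots> \<le> (\<Sum>ts\<in>bad. Fb ts)" by (rule sum_mono) (rule Fb_bad)
    also have "\<dots> \<le> (\<Sum>ts\<in>LHs. Fb ts)"
      by (rule sum_mono2[OF fLH]) (auto simp: bad_def Fb_nonneg)
    also have "\<dots> = (\<Sum>p\<in>Pset. (\<Sum>ts\<in>LHs. real (card ((B p - K) \<inter> perp (set ts)))) / (real (p - 1) * real (card K)))"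
      unfolding Fb_def by (subst sum.swap) (simp add: sum_divide_distrib)
    also have "\<dots> = (\<Sum>p\<in>Pset. real (card (B p - K)) * (real (card H) / real p) ^ h / (real (p - 1) * real (card K)))"
      using Pprime sum_bad_term unfolding LHs_def by simp
    also have "\<dots> \<le> (\<Sum>p\<in>Pset. real (card H) ^ h * ((real p ^ a p - 1) / ((real p - 1) * real p ^ h)))"
    proof (rule sum_mono)
      fix p assume p: "p \<in> Pset"
      have p2: "2 \<le> p" using p Pprime prime_ge_2_nat by blast
      have fB: "finite (B p)" unfolding B_def using finite_G by simp
      have cB: "card (B p) \<le> card K * p ^ a p" using card_B[of p] a[OF p] by simp
      have "real (card (B p - K)) = real (card (B p)) - real (card K)"
        using card_Diff_subset[OF finK K_B] card_mono[OF fB K_B] by simp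
      also have "\<dots> \<le> real (card K) * (real p ^ a p - 1)"
      proof -
        have "real (card (B p)) \<le> real (card K * p ^ a p)" using cB by (simp only: of_nat_le_iff)
        then show ?thesis by (simp add: algebra_simps)
      qed
      finally have cBK: "real (card (B p - K)) \<le> real (card K) * (real p ^ a p - 1)" .
      have "real (card (B p - K)) * (real (card H) / real p) ^ h / (real (p - 1) * real (card K))
            \<le> real (card K) * (real p ^ a p - 1) * (real (card H) / real p) ^ h / (real (p - 1) * real (card K))"
        using cBK p2 K0 by (intro divide_right_mono mult_right_mono) auto
      also have "\<dots> = real (card H) ^ h * ((real p ^ a p - 1) / ((real p - 1) * real p ^ h))"
        using p2 K0 by (simp add: of_nat_diff power_divide field_simps)
      finally show "real (card (B p - K)) * (real (card H) / real p) ^ h / (real (p - 1) * real (card K))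
            \<le> real (card H) ^ h * ((real p ^ a p - 1) / ((real p - 1) * real p ^ h))" .
    qed
    also have "\<dots> = real (card H) ^ h * S" unfolding S_def by (simp add: sum_distrib_left)
    finally show ?thesis .
  qed
  have S_le: "S \<le> \<epsilon>"
    using hc
  proof
    assume h1: "int h \<ge> int (grank N k) + \<lceil>log 2 (2 / \<epsilon>)\<rceil>"
    have ar: "\<forall>p\<in>Pset. a p \<le> grank N k"
    proof
      fix p assume p: "p \<in> Pset"
      have "a p \<le> card {j\<in>{..<k}. p dvd N j}" using a[OF p] by simp
      also have "\<dots> \<le> grank N k" using m_le_rank Pprime p by simp
      finally show "a p \<le> grank N k" .
    qed
    show ?thesis unfolding S_def by (rule arith_R[OF finite_Pset Pprime ar e h1])
  next
    assume h2: "int h \<ge> int (glen (grp N k)) - int (glen K) + \<lceil>log 2 (1 / \<epsilon>)\<rceil>"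
    have g1: "glen (grp N k) = Om (card G)" "glen K = Om (card K)" unfolding glen_def Om_def by simp_all
    have g2: "Om (card G) = Om (card K) + Om (card H)"
      using Om_mult[OF K0 H0] card_KH by simp
    have h3: "int h \<ge> int (Om (card H)) + \<lceil>log 2 (1 / \<epsilon>)\<rceil>" using h2 unfolding g1 g2 by simp
    have ad: "\<forall>p\<in>Pset. p ^ a p dvd card H" using a by blast
    show ?thesis unfolding S_def by (rule arith_L[OF finite_Pset Pprime ad H0 e h3])
  qed
  have "real (card good) = real (card H) ^ h - real (card bad)"
  proof -
    have "real (card good + card bad) = real (card H ^ h)" using gb cardLH by simp
    then show ?thesis by simp
  qed
  then have "prob_success N k f h K = 1 - real (card bad) / real (card H) ^ h"
    unfolding ps c_def using H0 by (simp add: power_one_over field_simps)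
  also have "\<dots> \<ge> 1 - \<epsilon>"
  proof -
    have "real (card bad) / real (card H) ^ h \<le> S" using bad_le H0 by (simp add: field_simps)
    then show ?thesis using S_le by simp
  qed
  finally show ?thesis .
qed

end


theorem theorem1:
  fixes N :: "nat \<Rightarrow> nat" and k :: nat and K :: "(nat \<Rightarrow> nat) set"
    and f :: "(nat \<Rightarrow> nat) \<Rightarrow> (nat \<Rightarrow> nat)" and \<epsilon> :: real and h :: nat
  assumes "\<forall>j<k. \<exists>p e. prime p \<and> e \<ge> 1 \<and> N j = p ^ e"
    and "is_subgroup N k K"
    and "\<forall>x\<in>grp N k. f x \<in> grp N k"
    and "\<forall>x\<in>grp N k. \<forall>y\<in>grp N k. f x = f y \<longleftrightarrow> gsub N k x y \<in> K"
    and "0 < \<epsilon>" and "\<epsilon> < 1"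
    and "int h \<ge> int (grank N k) + \<lceil>log 2 (2 / \<epsilon>)\<rceil>
         \<or> int h \<ge> int (glen (grp N k)) - int (glen K) + \<lceil>log 2 (1 / \<epsilon>)\<rceil>"
  shows "prob_success N k f h K \<ge> 1 - \<epsilon>"
proof -
  have Npos: "\<And>j. j < k \<Longrightarrow> 0 < N j"
  proof -
    fix j assume "j < k"
    then obtain p e where "prime p" "N j = p ^ e" using assms(1) by blast
    then show "0 < N j" using prime_gt_0_nat by simp
  qed
  interpret qctx N k K f
    by unfold_locales (use Npos assms(2,3,4) in auto)
  show ?thesis by (rule main[OF assms(1) assms(5) assms(6) assms(7)])
qed

end
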